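(* Let $n\ge2$, $h(q)=(e^{-|q_i-q_j|})_{i,j}$ and $g=h^{-1}$. Let $t\mapsto q(t)$, $t\in[0,t^* )$, be a geodesic of $g$ with $q_1(t)>\dots>q_n(t)$, and $p(t)=g(\dot q(t),\cdot)$, which approaches the singular set $\{q_k=q_{k+1}\}$ at time $t^*$: $q(t)\to q^*$ as $t\to t^*$ with $q^*_k=q^*_{k+1}$ and the other coordinates of $q^*$ pairwise distinct. Then the limits $\lim_{t\to t^*}(p_k(t)+p_{k+1}(t))$ and $\lim_{t\to t^*}p_j(t)$, $j\ne k,k+1$, exist and are finite. Moreover, the limit $V=\lim_{t\to t^*}\dot q(t)$ exists and is tangent to the singular set (i.e. $V_k=V_{k+1}$). Finally, the restriction $\tilde g$ of $g$ to the singular set is a well-defined $(n-1)$-dimensional Riemannian metric and $\tilde g(V,V)\le g(\dot q,\dot q)$.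
   Context: The singular set $\{q_k=q_{k+1}\}$ is parametrized by $(q_1,\dots,q_{n-1})\mapsto(q_1,\dots,q_{k-1},q_k,q_k,q_{k+1},\dots,q_{n-1})$; the restriction $\tilde g$ of $g$ to it means the limit of $g$ evaluated on vectors tangent to this set (vectors with equal $k$-th and $(k+1)$-th components) as $q_k-q_{k+1}\to0$. The quantity $g(\dot q,\dot q)$ is constant along the geodesic. *)

theory Defs
  imports "HOL-Analysis.Analysis"
begin

text \<open>Vectors in R^n are functions nat => real (only indices < n matter);
  n x n matrices are functions nat => nat => real (only indices < n matter).
  Indices are 0-based: the paper's q_1,...,q_n are q 0, ..., q (n-1).\<close>

definition hmat :: "(nat \<Rightarrow> real) \<Rightarrow> nat \<Rightarrow> nat \<Rightarrow> real" where
  "hmat q i j = exp (- \<bar>q i - q j\<bar>)"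

definition mat_inv :: "nat \<Rightarrow> (nat \<Rightarrow> nat \<Rightarrow> real) \<Rightarrow> nat \<Rightarrow> nat \<Rightarrow> real" where
  "mat_inv n A = (THE B. (\<forall>i j. (n \<le> i \<or> n \<le> j) \<longrightarrow> B i j = 0) \<and>
      (\<forall>i<n. \<forall>j<n. (\<Sum>l<n. A i l * B l j) = (if i = j then 1 else 0)))"

definition gmat :: "nat \<Rightarrow> (nat \<Rightarrow> real) \<Rightarrow> nat \<Rightarrow> nat \<Rightarrow> real" where
  "gmat n q = mat_inv n (hmat q)"

definition bilin :: "nat \<Rightarrow> (nat \<Rightarrow> nat \<Rightarrow> real) \<Rightarrow> (nat \<Rightarrow> real) \<Rightarrow> (nat \<Rightarrow> real) \<Rightarrow> real" where
  "bilin n G u w = (\<Sum>a<n. \<Sum>b<n. G a b * u a * w b)"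

definition pdiff :: "nat \<Rightarrow> ((nat \<Rightarrow> real) \<Rightarrow> real) \<Rightarrow> (nat \<Rightarrow> real) \<Rightarrow> real" where
  "pdiff i f y = deriv (\<lambda>s. f (y(i := y i + s))) 0"

definition chamber :: "nat \<Rightarrow> (nat \<Rightarrow> real) set" where
  "chamber m = {y. \<forall>i j. i < j \<longrightarrow> j < m \<longrightarrow> y j < y i}"

text \<open>Geodesic of g on [0,ts), written in Lagrangian (Euler--Lagrange) form with
  qd the velocity and p = g(qd, .) the momentum:
  d/dt p_i = 1/2 sum_{a,b} (d_i g_ab)(q) qd_a qd_b.\<close>
definition geodesic :: "nat \<Rightarrow> real \<Rightarrow> (real \<Rightarrow> nat \<Rightarrow> real) \<Rightarrow> (real \<Rightarrow> nat \<Rightarrow> real)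
     \<Rightarrow> (real \<Rightarrow> nat \<Rightarrow> real) \<Rightarrow> bool" where
  "geodesic n ts q qd p \<longleftrightarrow>
     (\<forall>t\<in>{0..<ts}. \<forall>i<n.
        ((\<lambda>s. q s i) has_real_derivative qd t i) (at t within {0..<ts}) \<and>
        p t i = (\<Sum>j<n. gmat n (q t) i j * qd t j) \<and>
        ((\<lambda>s. p s i) has_real_derivative
           ((1/2) * (\<Sum>a<n. \<Sum>b<n. pdiff i (\<lambda>y. gmat n y a b) (q t) * qd t a * qd t b)))
           (at t within {0..<ts}))"

text \<open>Embedding of R^(n-1) onto the singular set {q_k = q_(k+1)} (duplicate k-th coordinate)
  and the corresponding projection (drop coordinate k+1).\<close>
definition dup :: "nat \<Rightarrow> (nat \<Rightarrow> real) \<Rightarrow> nat \<Rightarrow> real" where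
  "dup k x = (\<lambda>i. if i \<le> k then x i else x (i - 1))"

definition dropc :: "nat \<Rightarrow> (nat \<Rightarrow> real) \<Rightarrow> nat \<Rightarrow> real" where
  "dropc k v = (\<lambda>i. if i \<le> k then v i else v (i + 1))"

definition tends_within :: "nat \<Rightarrow> ((nat \<Rightarrow> real) \<Rightarrow> real) \<Rightarrow> real \<Rightarrow> (nat \<Rightarrow> real)
     \<Rightarrow> (nat \<Rightarrow> real) set \<Rightarrow> bool" where
  "tends_within m f L x S \<longleftrightarrow>
     (\<forall>e>0. \<exists>d>0. \<forall>y\<in>S. (\<forall>i<m. \<bar>y i - x i\<bar> < d) \<longrightarrow> \<bar>f y - L\<bar> < e)"

definition smooth_fn :: "nat \<Rightarrow> (nat \<Rightarrow> real) set \<Rightarrow> ((nat \<Rightarrow> real) \<Rightarrow> real) \<Rightarrow> bool" where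
  "smooth_fn m D f \<longleftrightarrow>
     (\<forall>ds. set ds \<subseteq> {..<m} \<longrightarrow>
        (\<forall>x\<in>D. tends_within m (foldr pdiff ds f) (foldr pdiff ds f x) x D) \<and>
        (\<forall>x\<in>D. \<forall>i<m. ((\<lambda>s. foldr pdiff ds f (x(i := x i + s))) has_real_derivative
                           pdiff i (foldr pdiff ds f) x) (at 0)))"

definition riemannian :: "nat \<Rightarrow> (nat \<Rightarrow> real) set \<Rightarrow> ((nat \<Rightarrow> real) \<Rightarrow> nat \<Rightarrow> nat \<Rightarrow> real) \<Rightarrow> bool" where
  "riemannian m D G \<longleftrightarrow>
     (\<forall>a<m. \<forall>b<m. smooth_fn m D (\<lambda>x. G x a b)) \<and>
     (\<forall>x\<in>D. \<forall>a<m. \<forall>b<m. G x a b = G x b a) \<and>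
     (\<forall>x\<in>D. \<forall>u. (\<exists>i<m. u i \<noteq> 0) \<longrightarrow> bilin m (G x) u u > 0)"

end

theory Submission
  imports Defs
begin

definition ee :: "(nat \<Rightarrow> real) \<Rightarrow> nat \<Rightarrow> real" where
  "ee y r = exp (y (Suc r) - y r)"
definition ell :: "(nat \<Rightarrow> real) \<Rightarrow> nat \<Rightarrow> (nat \<Rightarrow> real) \<Rightarrow> real" where
  "ell y r u = u (Suc r) - ee y r * u r"
definition Bf :: "nat \<Rightarrow> (nat \<Rightarrow> real) \<Rightarrow> (nat \<Rightarrow> real) \<Rightarrow> (nat \<Rightarrow> real) \<Rightarrow> real" where
  "Bf m y u w = u 0 * w 0 + (\<Sum>r<m-1. ell y r u * ell y r w / (1 - (ee y r)^2))"
definition dl :: "nat \<Rightarrow> nat \<Rightarrow> real" where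
  "dl a = (\<lambda>i. if i = a then 1 else 0)"
definition Gm :: "nat \<Rightarrow> (nat \<Rightarrow> real) \<Rightarrow> nat \<Rightarrow> nat \<Rightarrow> real" where
  "Gm m y a b = (if a < m \<and> b < m then Bf m y (dl a) (dl b) else 0)"

lemma sum_dl: "(\<Sum>a<m. dl a j * u a) = (if j < m then u j else 0)"
proof -
  have "(\<Sum>a<m. dl a j * u a) = (\<Sum>a<m. (if a = j then u a else 0))"
    by (rule sum.cong) (auto simp: dl_def)
  then show ?thesis by (simp add: sum.delta')
qed

lemma ell_expand:
  assumes "Suc r < m"
  shows "ell y r u = (\<Sum>a<m. ell y r (dl a) * u a)"
proof -
  have "(\<Sum>a<m. ell y r (dl a) * u a) = (\<Sum>a<m. dl a (Suc r) * u a) - ee y r * (\<Sum>a<m. dl a r * u a)"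
    by (simp add: ell_def algebra_simps sum_subtractf sum_distrib_left)
  also have "\<dots> = ell y r u" using assms by (simp add: ell_def sum_dl)
  finally show ?thesis by simp
qed

lemma u0_expand:
  assumes "0 < m"
  shows "u 0 = (\<Sum>a<m. dl a 0 * u a)"
  using assms by (simp add: sum_dl)

lemma sum_swap3: "(\<Sum>a\<in>A. \<Sum>b\<in>B. \<Sum>r\<in>C. f a b r) = (\<Sum>r\<in>C. \<Sum>a\<in>A. \<Sum>b\<in>B. f a b r)"
proof -
  have "(\<Sum>a\<in>A. \<Sum>b\<in>B. \<Sum>r\<in>C. f a b r) = (\<Sum>a\<in>A. \<Sum>r\<in>C. \<Sum>b\<in>B. f a b r)"
    by (rule sum.cong[OF refl], rule sum.swap)
  also have "\<dots> = (\<Sum>r\<in>C. \<Sum>a\<in>A. \<Sum>b\<in>B. f a b r)" by (rule sum.swap)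
  finally show ?thesis .
qed

lemma Bf_sym: "Bf m y u w = Bf m y w u"
  unfolding Bf_def by (simp add: mult.commute)

lemma Bf_expand:
  assumes "0 < m"
  shows "Bf m y u w = (\<Sum>a<m. \<Sum>b<m. Bf m y (dl a) (dl b) * u a * w b)"
proof -
  have e1: "(\<Sum>a<m. \<Sum>b<m. dl a 0 * dl b 0 * u a * w b) = u 0 * w 0"
    using u0_expand[OF assms, of u] u0_expand[OF assms, of w]
    by (simp add: sum_product mult_ac)
  have e2: "(\<Sum>a<m. \<Sum>b<m. ell y r (dl a) * ell y r (dl b) / c * u a * w b) = ell y r u * ell y r w / c"
    if "r < m - 1" for r c
  proof -
    have "Suc r < m" using that by simp
    then have "ell y r u * ell y r w = (\<Sum>a<m. ell y r (dl a) * u a) * (\<Sum>b<m. ell y r (dl b) * w b)"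
      using ell_expand by metis
    then show ?thesis by (simp add: sum_product sum_divide_distrib mult_ac)
  qed
  have "(\<Sum>a<m. \<Sum>b<m. Bf m y (dl a) (dl b) * u a * w b)
      = (\<Sum>a<m. \<Sum>b<m. dl a 0 * dl b 0 * u a * w b) +
        (\<Sum>r<m-1. \<Sum>a<m. \<Sum>b<m. ell y r (dl a) * ell y r (dl b) / (1 - (ee y r)^2) * u a * w b)"
    unfolding Bf_def
    apply (simp add: algebra_simps sum.distrib sum_distrib_left sum_distrib_right)
    apply (subst sum_swap3) by simp
  also have "\<dots> = Bf m y u w" using e1 e2 by (simp add: Bf_def)
  finally show ?thesis by simp
qed

lemma chamberD: "y \<in> chamber m \<Longrightarrow> i < j \<Longrightarrow> j < m \<Longrightarrow> y j < y i"
  by (simp add: chamber_def)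

lemma chamber_le: "y \<in> chamber m \<Longrightarrow> i \<le> j \<Longrightarrow> j < m \<Longrightarrow> y j \<le> y i"
  using chamberD[of y m i j] by (cases "i = j") auto

lemma ee_pos: "0 < ee y r" by (simp add: ee_def)

lemma ee_lt1: "y \<in> chamber m \<Longrightarrow> Suc r < m \<Longrightarrow> ee y r < 1"
  by (auto simp: ee_def dest: chamberD[of y m r "Suc r"])

lemma one_minus_ee2: "y \<in> chamber m \<Longrightarrow> Suc r < m \<Longrightarrow> 0 < 1 - (ee y r)^2"
proof -
  assume a: "y \<in> chamber m" "Suc r < m"
  have "ee y r < 1" "0 < ee y r" using ee_lt1[OF a] ee_pos by auto
  then have "(ee y r)^2 < 1" by (simp add: power_less_one_iff abs_less_iff)
  then show ?thesis by simp
qed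

definition sg :: "nat \<Rightarrow> nat \<Rightarrow> real" where
  "sg a b = (if a < b then 1 else if b < a then -1 else 0)"

lemma hmat_ch: "y \<in> chamber m \<Longrightarrow> a < m \<Longrightarrow> b < m \<Longrightarrow> hmat y a b = exp (sg a b * (y b - y a))"
  by (cases a b rule: linorder_cases) (auto simp: hmat_def sg_def dest: chamberD)

lemma hmat_sym: "hmat y a b = hmat y b a"
  by (simp add: hmat_def abs_minus_commute)

lemma hmat_diag: "hmat y a a = 1" by (simp add: hmat_def)

lemma ell_hrow:
  assumes y: "y \<in> chamber m" and i: "i < m" and r: "Suc r < m"
  shows "ell y r (\<lambda>l. hmat y i l) = (if r < i then hmat y i (Suc r) * (1 - (ee y r)^2) else 0)"
proof (cases "r < i")
  case True
  have h1: "hmat y i (Suc r) = exp (y i - y (Suc r))"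
    using hmat_ch[OF y i r] True by (cases "Suc r = i") (auto simp: sg_def hmat_diag)
  have h2: "hmat y i r = exp (y i - y r)"
    using hmat_ch[OF y i, of r] True r by (simp add: sg_def)
  have "ee y r * exp (y i - y r) = exp (y i - y (Suc r)) * (ee y r)^2"
    by (simp add: ee_def power2_eq_square flip: exp_add) 
  then show ?thesis using True h1 h2 by (simp add: ell_def algebra_simps)
next
  case False
  have h1: "hmat y i (Suc r) = exp (y (Suc r) - y i)"
    using hmat_ch[OF y i r] False by (simp add: sg_def)
  have h2: "hmat y i r = exp (y r - y i)"
    using hmat_ch[OF y i, of r] False r by (cases "r = i") (auto simp: sg_def)
  have "ee y r * exp (y r - y i) = exp (y (Suc r) - y i)"
    by (simp add: ee_def flip: exp_add)
  then show ?thesis using False h1 h2 by (simp add: ell_def)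
qed

lemma hmat_step: "y \<in> chamber m \<Longrightarrow> i < m \<Longrightarrow> r < i \<Longrightarrow> ee y r * hmat y i (Suc r) = hmat y i r"
proof -
  assume y: "y \<in> chamber m" and i: "i < m" and r: "r < i"
  have "hmat y i (Suc r) = exp (y i - y (Suc r))"
    using hmat_ch[OF y i, of "Suc r"] r i by (cases "Suc r = i") (auto simp: sg_def hmat_diag)
  moreover have "hmat y i r = exp (y i - y r)"
    using hmat_ch[OF y i, of r] r i by (simp add: sg_def)
  ultimately show ?thesis by (simp add: ee_def flip: exp_add)
qed

lemma Bf_hrow:
  assumes y: "y \<in> chamber m" and i: "i < m" and j: "j < m"
  shows "Bf m y (\<lambda>l. hmat y i l) (dl j) = (if i = j then 1 else 0)"
proof -
  have "(\<Sum>r<m-1. ell y r (\<lambda>l. hmat y i l) * ell y r (dl j) / (1 - (ee y r)^2))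
      = (\<Sum>r<m-1. if r < i then hmat y i (Suc r) * dl j (Suc r) - hmat y i r * dl j r else 0)"
  proof (rule sum.cong[OF refl])
    fix r assume "r \<in> {..<m-1}"
    then have r: "Suc r < m" by auto
    have nz: "1 - (ee y r)^2 \<noteq> 0" using one_minus_ee2[OF y r] by simp
    show "ell y r (\<lambda>l. hmat y i l) * ell y r (dl j) / (1 - (ee y r)^2) =
      (if r < i then hmat y i (Suc r) * dl j (Suc r) - hmat y i r * dl j r else 0)"
    proof (cases "r < i")
      case True
      have "ell y r (\<lambda>l. hmat y i l) * ell y r (dl j) / (1 - (ee y r)^2)
          = hmat y i (Suc r) * (dl j (Suc r) - ee y r * dl j r)"
        using nz True ell_hrow[OF y i r] by (simp add: ell_def[of y r "dl j"])
      also have "\<dots> = hmat y i (Suc r) * dl j (Suc r) - (ee y r * hmat y i (Suc r)) * dl j r"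
        by (simp add: algebra_simps)
      finally show ?thesis using True hmat_step[OF y i True] by simp
    qed (simp add: ell_hrow[OF y i r])
  qed
  also have "\<dots> = (\<Sum>r<i. hmat y i (Suc r) * dl j (Suc r) - hmat y i r * dl j r)"
  proof -
    have "{..<i} \<subseteq> {..<m-1}" using i by auto
    then have "{r\<in>{..<m-1}. r < i} = {..<i}" by auto
    then show ?thesis by (simp add: sum.inter_filter[symmetric])
  qed
  also have "\<dots> = hmat y i i * dl j i - hmat y i 0 * dl j 0"
    by (rule sum_lessThan_telescope)
  finally show ?thesis by (simp add: Bf_def hmat_diag dl_def)
qed

lemma dl_sym: "dl j b = dl b j" by (simp add: dl_def)

lemma sum_dl2: "(\<Sum>b<m. u b * dl j b) = (if j < m then u j else 0)"
  using sum_dl[where m=m and j=j and u=u] by (simp add: dl_sym mult.commute)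

lemma Gm_sym: "Gm m y a b = Gm m y b a"
  by (auto simp: Gm_def Bf_sym)

lemma hG:
  assumes y: "y \<in> chamber m" and i: "i < m" and j: "j < m"
  shows "(\<Sum>l<m. hmat y i l * Gm m y l j) = (if i = j then 1 else 0)"
proof -
  have m: "0 < m" using i by simp
  have "Bf m y (\<lambda>l. hmat y i l) (dl j) = (\<Sum>a<m. \<Sum>b<m. (Bf m y (dl a) (dl b) * hmat y i a) * dl j b)"
    by (subst Bf_expand[OF m]) simp
  also have "\<dots> = (\<Sum>a<m. Bf m y (dl a) (dl j) * hmat y i a)"
    using j by (simp only: sum_dl2) simp
  also have "\<dots> = (\<Sum>l<m. hmat y i l * Gm m y l j)"
    using j by (intro sum.cong) (auto simp: Gm_def)
  finally show ?thesis using Bf_hrow[OF y i j] by simp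
qed

lemma Gh:
  assumes y: "y \<in> chamber m" and i: "i < m" and j: "j < m"
  shows "(\<Sum>l<m. Gm m y i l * hmat y l j) = (if i = j then 1 else 0)"
proof -
  have "(\<Sum>l<m. Gm m y i l * hmat y l j) = (\<Sum>l<m. hmat y j l * Gm m y l i)"
    by (intro sum.cong) (auto simp: Gm_sym hmat_sym)
  then show ?thesis using hG[OF y j i] by auto
qed

lemma gmat_eq:
  assumes y: "y \<in> chamber m"
  shows "gmat m y = Gm m y"
  unfolding gmat_def mat_inv_def
proof (rule the_equality)
  show "(\<forall>i j. (m \<le> i \<or> m \<le> j) \<longrightarrow> Gm m y i j = 0) \<and>
    (\<forall>i<m. \<forall>j<m. (\<Sum>l<m. hmat y i l * Gm m y l j) = (if i = j then 1 else 0))"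
    using hG[OF y] by (auto simp: Gm_def)
next
  fix B assume B: "(\<forall>i j. (m \<le> i \<or> m \<le> j) \<longrightarrow> B i j = 0) \<and>
    (\<forall>i<m. \<forall>j<m. (\<Sum>l<m. hmat y i l * B l j) = (if i = j then 1 else 0))"
  show "B = Gm m y"
  proof (intro ext)
    fix i j
    show "B i j = Gm m y i j"
    proof (cases "i < m \<and> j < m")
      case True
      have "B i j = (\<Sum>l<m. (if i = l then 1 else 0) * B l j)"
      proof -
        have "(\<Sum>l<m. (if i = l then 1 else 0) * B l j) = (\<Sum>l<m. (if i = l then B l j else 0))"
          by (intro sum.cong) auto
        then show ?thesis using True by simp
      qed
      also have "\<dots> = (\<Sum>l<m. (\<Sum>r<m. Gm m y i r * hmat y r l) * B l j)"
        using True Gh[OF y] by (intro sum.cong) auto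
      also have "\<dots> = (\<Sum>r<m. Gm m y i r * (\<Sum>l<m. hmat y r l * B l j))"
        by (simp add: sum_distrib_left sum_distrib_right mult.assoc) (rule sum.swap)
      also have "\<dots> = (\<Sum>r<m. Gm m y i r * (if r = j then 1 else 0))"
        using True B by (intro sum.cong) auto
      also have "\<dots> = (\<Sum>r<m. (if r = j then Gm m y i r else 0))"
        by (intro sum.cong) auto
      also have "\<dots> = Gm m y i j" using True by simp
      finally show ?thesis .
    next
      case False then show ?thesis using B by (auto simp: Gm_def)
    qed
  qed
qed

lemma bilin_Gm: "0 < m \<Longrightarrow> bilin m (Gm m y) u w = Bf m y u w"
  by (simp add: bilin_def Bf_expand Gm_def)

lemma bilin_gmat: "y \<in> chamber m \<Longrightarrow> 0 < m \<Longrightarrow> bilin m (gmat m y) u w = Bf m y u w"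
  by (simp add: gmat_eq bilin_Gm)

definition cf :: "(nat \<Rightarrow> real) \<Rightarrow> (nat \<Rightarrow> real) \<Rightarrow> nat \<Rightarrow> real" where
  "cf y u r = (if r = 0 then u 0 else ell y (r - 1) u / sqrt (1 - (ee y (r - 1))^2))"

lemma Bf_as_sum:
  assumes y: "y \<in> chamber m" and m: "0 < m"
  shows "Bf m y u w = (\<Sum>r<m. cf y u r * cf y w r)"
proof -
  obtain m' where m': "m = Suc m'" using m by (cases m) auto
  have "(\<Sum>r<m. cf y u r * cf y w r) = u 0 * w 0 + (\<Sum>r<m'. cf y u (Suc r) * cf y w (Suc r))"
    unfolding m' by (subst sum.lessThan_Suc_shift) (simp add: cf_def)
  also have "(\<Sum>r<m'. cf y u (Suc r) * cf y w (Suc r)) = (\<Sum>r<m-1. ell y r u * ell y r w / (1 - (ee y r)^2))"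
  proof (rule sum.cong)
    fix r assume "r \<in> {..<m-1}"
    then have "Suc r < m" using m' by auto
    then have c: "0 < 1 - (ee y r)^2" using one_minus_ee2[OF y] by blast
    have "sqrt (1 - (ee y r)^2) * sqrt (1 - (ee y r)^2) = 1 - (ee y r)^2"
      using c by simp
    then show "cf y u (Suc r) * cf y w (Suc r) = ell y r u * ell y r w / (1 - (ee y r)^2)"
      by (simp add: cf_def)
  qed (use m' in simp)
  finally show ?thesis by (simp add: Bf_def)
qed

lemma Bf_nonneg: "y \<in> chamber m \<Longrightarrow> 0 < m \<Longrightarrow> 0 \<le> Bf m y u u"
  by (simp add: Bf_as_sum sum_nonneg)

lemma Bf_CS: "y \<in> chamber m \<Longrightarrow> 0 < m \<Longrightarrow> (Bf m y u w)^2 \<le> Bf m y u u * Bf m y w w"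
  using Cauchy_Schwarz_ineq_sum[of "cf y u" "cf y w" "{..<m}"]
  by (simp add: Bf_as_sum power2_eq_square)

lemma Bf_pos:
  assumes y: "y \<in> chamber m" and m: "0 < m" and u: "\<exists>i<m. u i \<noteq> 0"
  shows "0 < Bf m y u u"
proof (rule ccontr)
  assume "\<not> 0 < Bf m y u u"
  then have "(\<Sum>r<m. cf y u r * cf y u r) = 0" using Bf_nonneg[OF y m, of u] Bf_as_sum[OF y m] by auto
  then have z: "\<forall>r<m. cf y u r * cf y u r = 0"
    by (subst (asm) sum_nonneg_eq_0_iff) auto
  have "\<forall>i<m. u i = 0"
  proof (intro allI impI)
    fix i assume "i < m" then show "u i = 0"
    proof (induction i)
      case 0 then show ?case using z by (auto simp: cf_def)
    next
      case (Suc r)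
      then have "u r = 0" by simp
      have "cf y u (Suc r) = 0" using z Suc.prems by auto
      then have "ell y r u = 0" using one_minus_ee2[OF y Suc.prems] by (simp add: cf_def)
      then show ?case using \<open>u r = 0\<close> by (simp add: ell_def)
    qed
  qed
  then show False using u by auto
qed

definition wfil :: "nat \<Rightarrow> (nat \<Rightarrow> real) \<Rightarrow> (nat \<Rightarrow> real) set \<Rightarrow> (nat \<Rightarrow> real) filter" where
  "wfil m x S = (INF d\<in>{0<..}. principal {y\<in>S. \<forall>i<m. \<bar>y i - x i\<bar> < d})"

lemma eventually_wfil:
  "eventually P (wfil m x S) \<longleftrightarrow> (\<exists>d>0. \<forall>y\<in>S. (\<forall>i<m. \<bar>y i - x i\<bar> < d) \<longrightarrow> P y)"
  unfolding wfil_def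
proof (subst eventually_INF_base)
  show "{0::real<..} \<noteq> {}" by auto
next
  fix a b :: real assume "a \<in> {0<..}" "b \<in> {0<..}"
  then show "\<exists>d\<in>{0<..}. principal {y \<in> S. \<forall>i<m. \<bar>y i - x i\<bar> < d} \<le>
      inf (principal {y \<in> S. \<forall>i<m. \<bar>y i - x i\<bar> < a}) (principal {y \<in> S. \<forall>i<m. \<bar>y i - x i\<bar> < b})"
    by (intro bexI[of _ "min a b"]) auto
qed (auto simp: eventually_principal)

lemma tends_within_wfil: "(f \<longlongrightarrow> L) (wfil m x S) \<Longrightarrow> tends_within m f L x S"
  unfolding tends_within_def tendsto_iff eventually_wfil by (simp add: dist_real_def)

lemma wfil_coord: "i < m \<Longrightarrow> ((\<lambda>y. y i) \<longlongrightarrow> x i) (wfil m x S)"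
  unfolding tendsto_iff eventually_wfil dist_real_def by (metis)

lemma wfil_in: "eventually (\<lambda>y. y \<in> S) (wfil m x S)"
  unfolding eventually_wfil by (auto intro: exI[of _ 1])

inductive sm :: "nat \<Rightarrow> (nat \<Rightarrow> real) set \<Rightarrow> ((nat \<Rightarrow> real) \<Rightarrow> real) \<Rightarrow> bool" for m D where
  sm_const: "sm m D (\<lambda>x. c)"
| sm_coord: "i < m \<Longrightarrow> sm m D (\<lambda>x. x i)"
| sm_add: "sm m D f \<Longrightarrow> sm m D g \<Longrightarrow> sm m D (\<lambda>x. f x + g x)"
| sm_mult: "sm m D f \<Longrightarrow> sm m D g \<Longrightarrow> sm m D (\<lambda>x. f x * g x)"
| sm_exp: "sm m D f \<Longrightarrow> sm m D (\<lambda>x. exp (f x))"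
| sm_inv: "sm m D f \<Longrightarrow> (\<forall>x\<in>D. f x \<noteq> 0) \<Longrightarrow> sm m D (\<lambda>x. inverse (f x))"

lemma sm_minus: "sm m D f \<Longrightarrow> sm m D (\<lambda>x. - f x)"
  using sm_mult[OF sm_const[of m D "-1"]] by simp

lemma sm_diff: "sm m D f \<Longrightarrow> sm m D g \<Longrightarrow> sm m D (\<lambda>x. f x - g x)"
  using sm_add[OF _ sm_minus] by simp

lemma sm_divide: "sm m D f \<Longrightarrow> sm m D g \<Longrightarrow> (\<forall>x\<in>D. g x \<noteq> 0) \<Longrightarrow> sm m D (\<lambda>x. f x / g x)"
  using sm_mult[OF _ sm_inv] by (simp add: divide_inverse)

lemma sm_power2: "sm m D f \<Longrightarrow> sm m D (\<lambda>x. (f x)^2)"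
  using sm_mult by (simp add: power2_eq_square)

lemma sm_sum: "finite A \<Longrightarrow> (\<forall>r\<in>A. sm m D (f r)) \<Longrightarrow> sm m D (\<lambda>x. \<Sum>r\<in>A. f r x)"
proof (induction A rule: finite_induct)
  case empty then show ?case using sm_const[of m D 0] by simp
next
  case (insert a A) then show ?case using sm_add[of m D "f a"] by simp
qed

lemma sm_cont: "sm m D f \<Longrightarrow> x \<in> D \<Longrightarrow> (f \<longlongrightarrow> f x) (wfil m x D)"
  by (induction rule: sm.induct) (auto intro!: tendsto_intros wfil_coord)

lemma upd0: "x(i := x i + 0) = (x :: nat \<Rightarrow> real)" by (rule ext) simp

lemma sm_deriv:
  assumes "sm m D f" "i < m"
  shows "\<exists>g. sm m D g \<and> (\<forall>x\<in>D. ((\<lambda>s. f (x(i := x i + s))) has_real_derivative g x) (at 0))"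
  using assms(1)
proof (induction rule: sm.induct)
  case (sm_const c) then show ?case by (intro exI[of _ "\<lambda>x. 0"]) (auto intro: sm.sm_const)
next
  case (sm_coord j)
  show ?case
  proof (intro exI[of _ "\<lambda>x. if j = i then 1 else 0"] conjI ballI)
    show "sm m D (\<lambda>x. if j = i then 1 else 0)" by (rule sm.sm_const)
    fix x
    show "((\<lambda>s. (x(i := x i + s)) j) has_real_derivative (if j = i then 1 else 0)) (at 0)"
      by (cases "j = i") (auto intro!: derivative_eq_intros)
  qed
next
  case (sm_add f g)
  then obtain f' g' where f': "sm m D f'" "\<forall>x\<in>D. ((\<lambda>s. f (x(i := x i + s))) has_real_derivative f' x) (at 0)"
    and g': "sm m D g'" "\<forall>x\<in>D. ((\<lambda>s. g (x(i := x i + s))) has_real_derivative g' x) (at 0)" by blast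
  show ?case
    by (rule exI[of _ "\<lambda>x. f' x + g' x"]) (use f' g' in \<open>auto intro!: sm.sm_add DERIV_add simp del: fun_upd_apply\<close>)
next
  case (sm_mult f g)
  then obtain f' g' where f': "sm m D f'" "\<forall>x\<in>D. ((\<lambda>s. f (x(i := x i + s))) has_real_derivative f' x) (at 0)"
    and g': "sm m D g'" "\<forall>x\<in>D. ((\<lambda>s. g (x(i := x i + s))) has_real_derivative g' x) (at 0)" by blast
  show ?case
  proof (rule exI[of _ "\<lambda>x. f' x * g x + f x * g' x"], intro conjI ballI)
    show "sm m D (\<lambda>x. f' x * g x + f x * g' x)"
      using f' g' sm_mult.hyps by (auto intro!: sm.sm_add sm.sm_mult)
    fix x assume "x \<in> D"
    then show "((\<lambda>s. f (x(i := x i + s)) * g (x(i := x i + s))) has_real_derivative f' x * g x + f x * g' x) (at 0)"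
      using DERIV_mult[of "\<lambda>s. f (x(i := x i + s))" "f' x" 0 UNIV "\<lambda>s. g (x(i := x i + s))" "g' x"] f' g'
      by (simp add: mult.commute)
  qed
next
  case (sm_exp f)
  then obtain f' where f': "sm m D f'" "\<forall>x\<in>D. ((\<lambda>s. f (x(i := x i + s))) has_real_derivative f' x) (at 0)" by blast
  show ?case
  proof (rule exI[of _ "\<lambda>x. exp (f x) * f' x"], intro conjI ballI)
    show "sm m D (\<lambda>x. exp (f x) * f' x)" using f' sm_exp.hyps by (auto intro!: sm.sm_mult sm.sm_exp)
    fix x assume "x \<in> D"
    then show "((\<lambda>s. exp (f (x(i := x i + s)))) has_real_derivative exp (f x) * f' x) (at 0)"
      using f' by (auto intro!: derivative_eq_intros)
  qed
next
  case (sm_inv f)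
  then obtain f' where f': "sm m D f'" "\<forall>x\<in>D. ((\<lambda>s. f (x(i := x i + s))) has_real_derivative f' x) (at 0)" by blast
  show ?case
  proof (rule exI[of _ "\<lambda>x. - (f' x * (inverse (f x) * inverse (f x)))"], intro conjI ballI)
    show "sm m D (\<lambda>x. - (f' x * (inverse (f x) * inverse (f x))))"
      using f' sm_inv.hyps by (auto intro!: sm_minus sm.sm_mult sm.sm_inv)
    fix x assume x: "x \<in> D"
    then show "((\<lambda>s. inverse (f (x(i := x i + s)))) has_real_derivative - (f' x * (inverse (f x) * inverse (f x)))) (at 0)"
      using DERIV_inverse_fun[of "\<lambda>s. f (x(i := x i + s))" "f' x" 0 UNIV] f' sm_inv.hyps
      by (simp add: power2_eq_square)
  qed
qed

definition lopen :: "(nat \<Rightarrow> real) set \<Rightarrow> bool" where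
  "lopen D \<longleftrightarrow> (\<forall>x\<in>D. \<forall>i. \<exists>e>0. \<forall>s. \<bar>s\<bar> < e \<longrightarrow> x(i := x i + s) \<in> D)"

lemma deriv_transfer:
  assumes FD: "\<forall>x\<in>D. F x = g x" and D: "lopen D" and x: "x \<in> D"
    and d: "((\<lambda>s. g (x(i := x i + s))) has_real_derivative d) (at 0)"
  shows "((\<lambda>s. F (x(i := x i + s))) has_real_derivative d) (at 0)" "pdiff i F x = d"
proof -
  obtain e where e: "e > 0" "\<forall>s. \<bar>s\<bar> < e \<longrightarrow> x(i := x i + s) \<in> D" using D x unfolding lopen_def by blast
  have ev: "eventually (\<lambda>s. F (x(i := x i + s)) = g (x(i := x i + s))) (nhds 0)"
    unfolding eventually_nhds_metric dist_real_def using e FD by (intro exI[of _ e]) auto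
  show 1: "((\<lambda>s. F (x(i := x i + s))) has_real_derivative d) (at 0)"
    using DERIV_cong_ev[OF refl ev refl] d by simp
  show "pdiff i F x = d" unfolding pdiff_def using DERIV_imp_deriv[OF 1] .
qed

lemma sm_foldr:
  assumes "sm m D f" "lopen D" "set ds \<subseteq> {..<m}"
  shows "\<exists>g. sm m D g \<and> (\<forall>x\<in>D. foldr pdiff ds f x = g x)"
  using assms(3)
proof (induction ds)
  case Nil then show ?case using assms(1) by auto
next
  case (Cons d ds)
  then obtain g where g: "sm m D g" "\<forall>x\<in>D. foldr pdiff ds f x = g x" by auto
  have "d < m" using Cons.prems by auto
  then obtain g' where g': "sm m D g'" "\<forall>x\<in>D. ((\<lambda>s. g (x(i := x i + s))) has_real_derivative g' x) (at 0)"
    if "i = d" for i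
    using sm_deriv[OF g(1)] by blast
  show ?case
  proof (intro exI[of _ g'] conjI ballI)
    show "sm m D g'" using g' by blast
    fix x assume x: "x \<in> D"
    show "foldr pdiff (d # ds) f x = g' x"
      using deriv_transfer(2)[OF g(2) assms(2) x, of d "g' x"] g' x by simp
  qed
qed

lemma sm_smooth:
  assumes "sm m D f" "lopen D"
  shows "smooth_fn m D f"
  unfolding smooth_fn_def
proof (intro allI impI conjI ballI)
  fix ds assume ds: "set ds \<subseteq> {..<m}"
  obtain g where g: "sm m D g" "\<forall>x\<in>D. foldr pdiff ds f x = g x" using sm_foldr[OF assms ds] by blast
  fix x assume x: "x \<in> D"
  have "tends_within m g (g x) x D" by (rule tends_within_wfil, rule sm_cont[OF g(1) x])
  then show "tends_within m (foldr pdiff ds f) (foldr pdiff ds f x) x D"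
    using g(2) x unfolding tends_within_def by auto
next
  fix ds x i assume ds: "set ds \<subseteq> {..<m}" and x: "x \<in> D" and i: "i < m"
  obtain g where g: "sm m D g" "\<forall>x\<in>D. foldr pdiff ds f x = g x" using sm_foldr[OF assms ds] by blast
  obtain g' where g': "sm m D g'" "\<forall>x\<in>D. ((\<lambda>s. g (x(i := x i + s))) has_real_derivative g' x) (at 0)"
    using sm_deriv[OF g(1) i] by blast
  show "((\<lambda>s. foldr pdiff ds f (x(i := x i + s))) has_real_derivative pdiff i (foldr pdiff ds f) x) (at 0)"
    using deriv_transfer[OF g(2) assms(2) x, of i "g' x"] g' x by simp
qed

lemma lopen_chamber: "lopen (chamber m)"
  unfolding lopen_def
proof (intro ballI allI)
  fix x i assume x: "x \<in> chamber m"
  define G where "G = (\<lambda>(a,b). x a - x b) ` {(a,b). a < b \<and> b < m}"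
  have fin: "finite G" unfolding G_def
    by (rule finite_imageI, rule finite_subset[of _ "{..<m} \<times> {..<m}"]) auto
  define e where "e = Min (insert 1 G)"
  have epos: "e > 0" unfolding e_def using fin
    by (subst Min_gr_iff) (auto simp: G_def dest: chamberD[OF x])
  have ele: "e \<le> x a - x b" if "a < b" "b < m" for a b
    unfolding e_def using fin that by (intro Min_le) (auto simp: G_def)
  show "\<exists>e>0. \<forall>s. \<bar>s\<bar> < e \<longrightarrow> x(i := x i + s) \<in> chamber m"
  proof (intro exI[of _ e] conjI allI impI)
    fix s :: real assume s: "\<bar>s\<bar> < e"
    show "x(i := x i + s) \<in> chamber m" unfolding chamber_def
    proof (intro CollectI allI impI)
      fix a b assume ab: "a < b" "b < m"
      then show "(x(i := x i + s)) b < (x(i := x i + s)) a"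
        using ele[OF ab] s chamberD[OF x ab] by auto
    qed
  qed (rule epos)
qed

lemma sm_ell: "Suc r < m \<Longrightarrow> sm m D (\<lambda>y. ell y r u)"
  unfolding ell_def ee_def
  by (intro sm_diff sm_mult sm_exp sm_const sm_coord) auto

lemma sm_Gm: "sm m (chamber m) (\<lambda>y. Gm m y a b)"
proof (cases "a < m \<and> b < m")
  case True
  have "sm m (chamber m) (\<lambda>y. dl a 0 * dl b 0 + (\<Sum>r<m-1. ell y r (dl a) * ell y r (dl b) / (1 - (ee y r)^2)))"
  proof (intro sm_add sm_const sm_sum ballI)
    fix r assume r: "r \<in> {..<m-1}"
    then have r1: "Suc r < m" by auto
    have d: "sm m (chamber m) (\<lambda>y. 1 - (ee y r)^2)" using r1 unfolding ee_def
      by (intro sm_diff sm_const sm_power2 sm_exp sm_coord) auto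
    have nz: "\<forall>y\<in>chamber m. 1 - (ee y r)^2 \<noteq> 0" using one_minus_ee2 r1 by fastforce
    show "sm m (chamber m) (\<lambda>y. ell y r (dl a) * ell y r (dl b) / (1 - (ee y r)^2))"
      by (rule sm_divide[OF sm_mult[OF sm_ell[OF r1] sm_ell[OF r1]] d nz])
  qed simp
  then show ?thesis using True by (simp add: Gm_def Bf_def)
next
  case False
  then have "(\<lambda>y. Gm m y a b) = (\<lambda>y. 0)" by (auto simp: Gm_def)
  then show ?thesis by (simp add: sm_const)
qed

lemma riem_Gm:
  assumes m: "0 < m"
  shows "riemannian m (chamber m) (Gm m)"
  unfolding riemannian_def
proof (intro conjI allI impI ballI)
  fix a b assume "a < m" "b < m"
  show "smooth_fn m (chamber m) (\<lambda>x. Gm m x a b)" by (rule sm_smooth[OF sm_Gm lopen_chamber])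
next
  fix x a b show "Gm m x a b = Gm m x b a" by (rule Gm_sym)
next
  fix x and u :: "nat \<Rightarrow> real" assume x: "x \<in> chamber m" and u: "\<exists>i<m. u i \<noteq> 0"
  show "0 < bilin m (Gm m x) u u" using Bf_pos[OF x m u] bilin_Gm[OF m] by simp
qed

definition Tm :: "(nat \<Rightarrow> real) \<Rightarrow> (nat \<Rightarrow> real) \<Rightarrow> (nat \<Rightarrow> real) \<Rightarrow> nat \<Rightarrow> real" where
  "Tm y U W r = ell y r U * ell y r W / (1 - (ee y r)^2)"

definition Bk :: "nat \<Rightarrow> nat \<Rightarrow> (nat \<Rightarrow> real) \<Rightarrow> (nat \<Rightarrow> real) \<Rightarrow> (nat \<Rightarrow> real) \<Rightarrow> real" where
  "Bk n k y U W = U 0 * W 0 + (\<Sum>r<k. Tm y U W r) + (\<Sum>r\<in>{Suc k..<n-1}. Tm y U W r)"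

lemma Bf_split:
  assumes "Suc k < n"
  shows "Bf n y U W = Bk n k y U W + Tm y U W k"
proof -
  have "(\<Sum>r\<in>{0..<Suc k}. Tm y U W r) + (\<Sum>r\<in>{Suc k..<n-1}. Tm y U W r) = (\<Sum>r\<in>{0..<n-1}. Tm y U W r)"
    by (rule sum.atLeastLessThan_concat) (use assms in auto)
  then have "(\<Sum>r<n-1. Tm y U W r) = (\<Sum>r\<in>{0..<Suc k}. Tm y U W r) + (\<Sum>r\<in>{Suc k..<n-1}. Tm y U W r)"
    by (simp add: atLeast0LessThan)
  also have "(\<Sum>r\<in>{0..<Suc k}. Tm y U W r) = (\<Sum>r<k. Tm y U W r) + Tm y U W k"
    by (simp add: atLeast0LessThan)
  finally show ?thesis by (simp add: Bf_def Bk_def Tm_def[symmetric])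
qed

lemma ell_dup_lo: "r < k \<Longrightarrow> ell (dup k x) r (dup k u) = ell x r u"
  by (simp add: ell_def ee_def dup_def)

lemma ee_dup_lo: "r < k \<Longrightarrow> ee (dup k x) r = ee x r"
  by (simp add: ee_def dup_def)

lemma ell_dup_hi: "k \<le> r \<Longrightarrow> ell (dup k x) (Suc r) (dup k u) = ell x r u"
  by (simp add: ell_def ee_def dup_def)

lemma ee_dup_hi: "k \<le> r \<Longrightarrow> ee (dup k x) (Suc r) = ee x r"
  by (simp add: ee_def dup_def)

lemma Bk_dup:
  assumes "Suc k < n"
  shows "Bk n k (dup k x) (dup k u) (dup k w) = Bf (n-1) x u w"
proof -
  obtain n' where n': "n = Suc (Suc n')" using assms by (cases n; cases "n - 1") auto
  have kn: "k \<le> n'" using assms n' by simp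
  have "(\<Sum>r\<in>{0..<k}. Tm x u w r) + (\<Sum>r\<in>{k..<n'}. Tm x u w r) = (\<Sum>r\<in>{0..<n'}. Tm x u w r)"
    by (rule sum.atLeastLessThan_concat) (use kn in auto)
  then have "(\<Sum>r<n-1-1. Tm x u w r) = (\<Sum>r\<in>{0..<k}. Tm x u w r) + (\<Sum>r\<in>{k..<n'}. Tm x u w r)"
    using n' by (simp add: atLeast0LessThan)
  moreover have "(\<Sum>r<k. Tm (dup k x) (dup k u) (dup k w) r) = (\<Sum>r\<in>{0..<k}. Tm x u w r)"
    by (auto simp: atLeast0LessThan Tm_def ell_dup_lo ee_dup_lo intro: sum.cong)
  moreover have "(\<Sum>r\<in>{Suc k..<n-1}. Tm (dup k x) (dup k u) (dup k w) r) = (\<Sum>r\<in>{k..<n'}. Tm x u w r)"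
  proof -
    have "{Suc k..<n-1} = {Suc k..<Suc n'}" using n' by simp
    then have "(\<Sum>r\<in>{Suc k..<n-1}. Tm (dup k x) (dup k u) (dup k w) r) = (\<Sum>r\<in>{k..<n'}. Tm (dup k x) (dup k u) (dup k w) (Suc r))"
      by (simp only: sum.shift_bounds_Suc_ivl)
    also have "\<dots> = (\<Sum>r\<in>{k..<n'}. Tm x u w r)"
      by (rule sum.cong) (auto simp: Tm_def ell_dup_hi ee_dup_hi)
    finally show ?thesis .
  qed
  moreover have "dup k u 0 = u 0" "dup k w 0 = w 0" by (auto simp: dup_def)
  ultimately show ?thesis by (simp add: Bk_def Bf_def Tm_def)
qed

lemma ee_ne1: "y r \<noteq> y (Suc r) \<Longrightarrow> 1 - (ee y r)^2 \<noteq> 0"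
proof
  assume a: "y r \<noteq> y (Suc r)" "1 - (ee y r)^2 = 0"
  then have "exp (2 * (y (Suc r) - y r)) = 1" by (simp add: ee_def power2_eq_square flip: exp_add)
  then show False using a(1) by simp
qed

lemma Bk_tendsto:
  assumes Y: "\<forall>i<n. ((\<lambda>t. Y t i) \<longlongrightarrow> y0 i) F"
    and U: "\<forall>i<n. ((\<lambda>t. U t i) \<longlongrightarrow> U0 i) F"
    and W: "\<forall>i<n. ((\<lambda>t. W t i) \<longlongrightarrow> W0 i) F"
    and n: "0 < n" and kn: "Suc k < n" and d: "\<forall>r. Suc r < n \<longrightarrow> r \<noteq> k \<longrightarrow> y0 r \<noteq> y0 (Suc r)"
  shows "((\<lambda>t. Bk n k (Y t) (U t) (W t)) \<longlongrightarrow> Bk n k y0 U0 W0) F"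
proof -
  have T: "((\<lambda>t. Tm (Y t) (U t) (W t) r) \<longlongrightarrow> Tm y0 U0 W0 r) F" if "Suc r < n" "r \<noteq> k" for r
  proof -
    have "1 - (ee y0 r)^2 \<noteq> 0" using d that ee_ne1 by blast
    then show ?thesis unfolding Tm_def ell_def ee_def
      using that Y U W by (intro tendsto_intros) auto
  qed
  show ?thesis unfolding Bk_def using T n U W kn
    by (intro tendsto_intros) auto
qed

lemma dup_dropc: "U k = U (Suc k) \<Longrightarrow> dup k (dropc k U) = U"
proof (rule ext)
  fix i assume "U k = U (Suc k)"
  then show "dup k (dropc k U) i = U i"
    by (cases "i \<le> k"; cases "i = Suc k") (auto simp: dup_def dropc_def)
qed

lemma part_tends:
  assumes kn: "Suc k < n" and x: "x \<in> chamber (n - 1)"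
  shows "tends_within n (\<lambda>y. bilin n (gmat n y) (dup k u) (dup k w))
                    (bilin (n - 1) (Gm (n - 1) x) u w) (dup k x) (chamber n)"
proof (rule tends_within_wfil)
  let ?F = "wfil n (dup k x) (chamber n)"
  have n1: "0 < n - 1" using kn by simp
  have ev: "eventually (\<lambda>y. bilin n (gmat n y) (dup k u) (dup k w) =
      Bk n k y (dup k u) (dup k w) + u k * w k * ((1 - ee y k) / (1 + ee y k))) ?F"
    using wfil_in
  proof (rule eventually_mono)
    fix y assume y: "y \<in> chamber n"
    have e1: "ee y k < 1" "0 < ee y k" using ee_lt1[OF y kn] ee_pos by auto
    have "Tm y (dup k u) (dup k w) k = u k * w k * ((1 - ee y k)^2 / (1 - (ee y k)^2))"
      by (simp add: Tm_def ell_def dup_def algebra_simps power2_eq_square)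
    also have "(1 - ee y k)^2 / (1 - (ee y k)^2) = ((1 - ee y k) * (1 - ee y k)) / ((1 - ee y k) * (1 + ee y k))"
      by (simp add: power2_eq_square algebra_simps)
    also have "\<dots> = (1 - ee y k) / (1 + ee y k)"
      using e1 by (subst mult_divide_mult_cancel_left) auto
    finally show "bilin n (gmat n y) (dup k u) (dup k w) =
      Bk n k y (dup k u) (dup k w) + u k * w k * ((1 - ee y k) / (1 + ee y k))"
      using bilin_gmat[OF y, of "dup k u" "dup k w"] kn Bf_split[OF kn] by simp
  qed
  have c: "\<forall>i<n. ((\<lambda>y. y i) \<longlongrightarrow> dup k x i) ?F" using wfil_coord by blast
  have dd: "\<forall>r. Suc r < n \<longrightarrow> r \<noteq> k \<longrightarrow> dup k x r \<noteq> dup k x (Suc r)"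
  proof (intro allI impI)
    fix r assume r: "Suc r < n" "r \<noteq> k"
    show "dup k x r \<noteq> dup k x (Suc r)"
    proof (cases "r < k")
      case True
      then have "Suc r < n - 1" using kn by linarith
      then show ?thesis using chamberD[OF x, of r "Suc r"] True by (auto simp: dup_def)
    next
      case False then have "k < r" using r by simp
      moreover have "r < n - 1" using r by linarith
      ultimately show ?thesis using chamberD[OF x, of "r - 1" r] r by (auto simp: dup_def)
    qed
  qed
  have L1: "((\<lambda>y. Bk n k y (dup k u) (dup k w)) \<longlongrightarrow> Bk n k (dup k x) (dup k u) (dup k w)) ?F"
    using Bk_tendsto[of n "\<lambda>y. y" "dup k x" ?F "\<lambda>_. dup k u" "dup k u" "\<lambda>_. dup k w" "dup k w" k] c dd kn
    by auto
  have "((\<lambda>y. ee y k) \<longlongrightarrow> ee (dup k x) k) ?F" unfolding ee_def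
    using c kn by (intro tendsto_intros) auto
  moreover have "ee (dup k x) k = 1" by (simp add: ee_def dup_def)
  ultimately have L2: "((\<lambda>y. u k * w k * ((1 - ee y k) / (1 + ee y k))) \<longlongrightarrow> u k * w k * ((1 - 1) / (1 + 1))) ?F"
    by (intro tendsto_intros) auto
  have "((\<lambda>y. Bk n k y (dup k u) (dup k w) + u k * w k * ((1 - ee y k) / (1 + ee y k)))
        \<longlongrightarrow> Bf (n-1) x u w) ?F"
    using tendsto_add[OF L1 L2] Bk_dup[OF kn] by simp
  then show "((\<lambda>y. bilin n (gmat n y) (dup k u) (dup k w)) \<longlongrightarrow> bilin (n - 1) (Gm (n - 1) x) u w) ?F"
    using tendsto_cong[OF ev] bilin_Gm[OF n1] by simp
qed

lemma Bf_lin2: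
  assumes m: "0 < m"
  shows "Bf m y u w = (\<Sum>b<m. w b * Bf m y u (dl b))"
proof -
  have "Bf m y u (dl b) = (\<Sum>a<m. Bf m y (dl a) (dl b) * u a)" if "b < m" for b
  proof -
    have "Bf m y u (dl b) = (\<Sum>a<m. \<Sum>c<m. (Bf m y (dl a) (dl c) * u a) * dl b c)"
      by (subst Bf_expand[OF m]) simp
    also have "\<dots> = (\<Sum>a<m. Bf m y (dl a) (dl b) * u a)" using that by (simp only: sum_dl2) simp
    finally show ?thesis .
  qed
  then have "(\<Sum>b<m. w b * Bf m y u (dl b)) = (\<Sum>b<m. \<Sum>a<m. Bf m y (dl a) (dl b) * u a * w b)"
  proof (intro sum.cong refl)
    fix b assume b: "b \<in> {..<m}"
    assume h: "\<And>b. b < m \<Longrightarrow> Bf m y u (dl b) = (\<Sum>a<m. Bf m y (dl a) (dl b) * u a)"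
    have "w b * Bf m y u (dl b) = w b * (\<Sum>a<m. Bf m y (dl a) (dl b) * u a)" using h b by simp
    also have "\<dots> = (\<Sum>a<m. w b * (Bf m y (dl a) (dl b) * u a))" by (rule sum_distrib_left)
    finally show "w b * Bf m y u (dl b) = (\<Sum>a<m. Bf m y (dl a) (dl b) * u a * w b)"
      by (simp add: mult_ac)
  qed
  also have "\<dots> = Bf m y u w" by (subst Bf_expand[OF m]) (rule sum.swap)
  finally show ?thesis by simp
qed

lemma p_Bf:
  assumes m: "0 < m"
  shows "(\<Sum>i<m. (\<Sum>j<m. Gm m y i j * v j) * U i) = Bf m y U v"
proof -
  have "(\<Sum>i<m. (\<Sum>j<m. Gm m y i j * v j) * U i) = (\<Sum>i<m. \<Sum>j<m. Bf m y (dl i) (dl j) * U i * v j)"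
  proof (rule sum.cong[OF refl])
    fix i assume i: "i \<in> {..<m}"
    have "(\<Sum>j<m. Gm m y i j * v j) * U i = (\<Sum>j<m. Gm m y i j * v j * U i)"
      by (rule sum_distrib_right)
    also have "\<dots> = (\<Sum>j<m. Bf m y (dl i) (dl j) * U i * v j)"
      using i by (intro sum.cong) (auto simp: Gm_def)
    finally show "(\<Sum>j<m. Gm m y i j * v j) * U i = (\<Sum>j<m. Bf m y (dl i) (dl j) * U i * v j)" .
  qed
  then show ?thesis using Bf_expand[OF m, of y U v] by (simp only:)
qed

lemma v_hp:
  assumes y: "y \<in> chamber m" and i: "i < m"
  shows "(\<Sum>j<m. hmat y i j * (\<Sum>l<m. Gm m y j l * v l)) = v i"
proof -
  have "(\<Sum>j<m. hmat y i j * (\<Sum>l<m. Gm m y j l * v l)) = (\<Sum>l<m. (\<Sum>j<m. hmat y i j * Gm m y j l) * v l)"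
  proof -
    have "(\<Sum>j<m. hmat y i j * (\<Sum>l<m. Gm m y j l * v l)) = (\<Sum>j<m. \<Sum>l<m. hmat y i j * Gm m y j l * v l)"
      by (simp only: sum_distrib_left mult.assoc)
    also have "\<dots> = (\<Sum>l<m. \<Sum>j<m. hmat y i j * Gm m y j l * v l)" by (rule sum.swap)
    also have "\<dots> = (\<Sum>l<m. (\<Sum>j<m. hmat y i j * Gm m y j l) * v l)" by (simp only: sum_distrib_right)
    finally show ?thesis .
  qed
  also have "\<dots> = (\<Sum>l<m. (if i = l then v l else 0))"
    using hG[OF y i] by (intro sum.cong) auto
  finally show ?thesis using i by simp
qed

lemma Bf_hrow_hrow:
  assumes y: "y \<in> chamber m" and i: "i < m"
  shows "Bf m y (\<lambda>l. hmat y i l) (\<lambda>l. hmat y i l) = 1"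
proof -
  have m: "0 < m" using i by simp
  have "Bf m y (\<lambda>l. hmat y i l) (\<lambda>l. hmat y i l) = (\<Sum>b<m. hmat y i b * (if i = b then 1 else 0))"
    using Bf_hrow[OF y i] by (subst Bf_lin2[OF m]) (intro sum.cong, auto)
  also have "\<dots> = (\<Sum>b<m. (if i = b then hmat y i b else 0))" by (intro sum.cong) auto
  finally show ?thesis using i by (simp add: hmat_diag)
qed

lemma CS_p:
  assumes y: "y \<in> chamber m" and m: "0 < m"
  shows "(\<Sum>i<m. (\<Sum>j<m. Gm m y i j * v j) * U i)^2 \<le> Bf m y U U * Bf m y v v"
  using p_Bf[OF m] Bf_CS[OF y m] by simp

lemma vel_bound:
  assumes y: "y \<in> chamber m" and i: "i < m"
  shows "(v i)^2 \<le> Bf m y v v"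
proof -
  have m: "0 < m" using i by simp
  have "v i = (\<Sum>j<m. (\<Sum>l<m. Gm m y j l * v l) * hmat y i j)"
    using v_hp[OF y i, of v] by (simp add: mult.commute)
  then show ?thesis using CS_p[OF y m, of v "\<lambda>l. hmat y i l"] Bf_hrow_hrow[OF y i] by simp
qed

lemma upd_dl: "(y(i := y i + s)) b = y b + s * dl i b"
  by (simp add: dl_def)

lemma upd_in_chamber:
  assumes y: "y \<in> chamber n"
  shows "eventually (\<lambda>s. y(i := y i + s) \<in> chamber n) (nhds 0)"
proof -
  obtain e where e: "e > 0" "\<forall>s. \<bar>s\<bar> < e \<longrightarrow> y(i := y i + s) \<in> chamber n"
    using lopen_chamber y unfolding lopen_def by blast
  show ?thesis unfolding eventually_nhds_metric dist_real_def using e by (intro exI[of _ e]) auto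
qed

lemma Gm_deriv:
  assumes y: "y \<in> chamber n" and i: "i < n"
  shows "((\<lambda>s. Gm n (y(i := y i + s)) a b) has_real_derivative deriv (\<lambda>s. Gm n (y(i := y i + s)) a b) 0) (at 0)"
    "pdiff i (\<lambda>z. gmat n z a b) y = deriv (\<lambda>s. Gm n (y(i := y i + s)) a b) 0"
proof -
  obtain g where g: "sm n (chamber n) g" "\<forall>x\<in>chamber n. ((\<lambda>s. Gm n (x(i := x i + s)) a b) has_real_derivative g x) (at 0)"
    using sm_deriv[OF sm_Gm i] by blast
  have d: "((\<lambda>s. Gm n (y(i := y i + s)) a b) has_real_derivative g y) (at 0)" using g y by blast
  then have "deriv (\<lambda>s. Gm n (y(i := y i + s)) a b) 0 = g y" by (rule DERIV_imp_deriv)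
  then show "((\<lambda>s. Gm n (y(i := y i + s)) a b) has_real_derivative deriv (\<lambda>s. Gm n (y(i := y i + s)) a b) 0) (at 0)"
    using d by simp
  have "\<forall>x\<in>chamber n. gmat n x a b = Gm n x a b" using gmat_eq by simp
  from deriv_transfer(2)[OF this lopen_chamber y d] \<open>deriv _ 0 = g y\<close>
  show "pdiff i (\<lambda>z. gmat n z a b) y = deriv (\<lambda>s. Gm n (y(i := y i + s)) a b) 0" by simp
qed

definition Hd :: "(nat \<Rightarrow> real) \<Rightarrow> nat \<Rightarrow> nat \<Rightarrow> nat \<Rightarrow> real" where
  "Hd y i l b = hmat y l b * (sg l b * (dl i b - dl i l))"

lemma ident_deriv:
  assumes y: "y \<in> chamber n" and i: "i < n" and a: "a < n" and b: "b < n"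
  shows "(\<Sum>l<n. deriv (\<lambda>s. Gm n (y(i := y i + s)) a l) 0 * hmat y l b + Gm n y a l * Hd y i l b) = 0"
proof -
  define phi where "phi s = (\<Sum>l<n. Gm n (y(i := y i + s)) a l * exp (sg l b * ((y b + s * dl i b) - (y l + s * dl i l))))" for s
  have ev: "eventually (\<lambda>s. phi s = (if a = b then 1 else 0)) (nhds 0)"
    using upd_in_chamber[OF y, of i]
  proof (rule eventually_mono)
    fix s assume ys: "y(i := y i + s) \<in> chamber n"
    have "phi s = (\<Sum>l<n. Gm n (y(i := y i + s)) a l * hmat (y(i := y i + s)) l b)"
      unfolding phi_def by (intro sum.cong refl) (simp add: hmat_ch[OF ys _ b] upd_dl del: fun_upd_apply)
    then show "phi s = (if a = b then 1 else 0)" using Gh[OF ys a b] by simp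
  qed
  have d0: "(phi has_real_derivative 0) (at 0)"
    using DERIV_cong_ev[OF refl ev refl] by (simp add: DERIV_const)
  have d1: "(phi has_real_derivative (\<Sum>l<n. deriv (\<lambda>s. Gm n (y(i := y i + s)) a l) 0 * hmat y l b + Gm n y a l * Hd y i l b)) (at 0)"
    unfolding phi_def
  proof (intro DERIV_sum)
    fix l assume l: "l \<in> {..<n}"
    have e: "((\<lambda>s. exp (sg l b * ((y b + s * dl i b) - (y l + s * dl i l)))) has_real_derivative Hd y i l b) (at 0)"
      using hmat_ch[OF y _ b, of l] l
      by (auto intro!: derivative_eq_intros simp: Hd_def algebra_simps)
    have "Gm n (y(i := y i + 0)) a l = Gm n y a l" by simp
    moreover have "exp (sg l b * ((y b + 0 * dl i b) - (y l + 0 * dl i l))) = hmat y l b"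
      using hmat_ch[OF y _ b, of l] l by simp
    ultimately show "((\<lambda>s. Gm n (y(i := y i + s)) a l * exp (sg l b * ((y b + s * dl i b) - (y l + s * dl i l))))
       has_real_derivative deriv (\<lambda>s. Gm n (y(i := y i + s)) a l) 0 * hmat y l b + Gm n y a l * Hd y i l b) (at 0)"
      using DERIV_mult[OF Gm_deriv(1)[OF y i, of a l] e] by (simp add: mult.commute)
  qed
  show ?thesis using DERIV_unique[OF d1 d0] .
qed

lemma sg_anti: "sg b a = - sg a b" by (simp add: sg_def)

lemma S4:
  fixes v :: "nat \<Rightarrow> real"
  assumes y: "y \<in> chamber n" and i: "i < n"
  defines "Gd \<equiv> \<lambda>a b. deriv (\<lambda>s. Gm n (y(i := y i + s)) a b) 0"
  defines "P \<equiv> \<lambda>l. \<Sum>j<n. Gm n y l j * v j"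
  shows "(\<Sum>a<n. \<Sum>b<n. Gd a b * v a * v b) = - (\<Sum>b<n. \<Sum>c<n. P b * Hd y i b c * P c)"
proof -
  have vb: "v b = (\<Sum>c<n. hmat y b c * P c)" if "b < n" for b
    using v_hp[OF y that, of v] unfolding P_def by simp
  have id: "(\<Sum>b<n. Gd a b * hmat y b c) = - (\<Sum>b<n. Gm n y a b * Hd y i b c)" if "a < n" "c < n" for a c
    using ident_deriv[OF y i that] unfolding Gd_def by (simp add: sum.distrib eq_neg_iff_add_eq_0)
  have "(\<Sum>a<n. \<Sum>b<n. Gd a b * v a * v b) = (\<Sum>a<n. \<Sum>b<n. \<Sum>c<n. Gd a b * v a * (hmat y b c * P c))"
    by (intro sum.cong refl) (simp add: vb sum_distrib_left)
  also have "\<dots> = (\<Sum>a<n. \<Sum>c<n. \<Sum>b<n. Gd a b * v a * (hmat y b c * P c))"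
    by (rule sum.cong[OF refl]) (rule sum.swap)
  also have "\<dots> = (\<Sum>a<n. \<Sum>c<n. (v a * P c) * (\<Sum>b<n. Gd a b * hmat y b c))"
    by (intro sum.cong refl) (simp add: sum_distrib_left mult_ac)
  also have "\<dots> = (\<Sum>a<n. \<Sum>c<n. (v a * P c) * (- (\<Sum>b<n. Gm n y a b * Hd y i b c)))"
    by (intro sum.cong refl) (simp add: id)
  also have "\<dots> = - (\<Sum>a<n. \<Sum>c<n. \<Sum>b<n. v a * Gm n y a b * Hd y i b c * P c)"
    by (simp add: sum_negf sum_distrib_left mult_ac)
  also have "(\<Sum>a<n. \<Sum>c<n. \<Sum>b<n. v a * Gm n y a b * Hd y i b c * P c)
      = (\<Sum>b<n. \<Sum>c<n. \<Sum>a<n. v a * Gm n y a b * Hd y i b c * P c)"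
  proof -
    have "(\<Sum>a<n. \<Sum>c<n. \<Sum>b<n. v a * Gm n y a b * Hd y i b c * P c)
        = (\<Sum>a<n. \<Sum>b<n. \<Sum>c<n. v a * Gm n y a b * Hd y i b c * P c)"
      by (rule sum.cong[OF refl]) (rule sum.swap)
    also have "\<dots> = (\<Sum>b<n. \<Sum>a<n. \<Sum>c<n. v a * Gm n y a b * Hd y i b c * P c)" by (rule sum.swap)
    also have "\<dots> = (\<Sum>b<n. \<Sum>c<n. \<Sum>a<n. v a * Gm n y a b * Hd y i b c * P c)"
      by (rule sum.cong[OF refl]) (rule sum.swap)
    finally show ?thesis .
  qed
  also have "\<dots> = (\<Sum>b<n. \<Sum>c<n. P b * Hd y i b c * P c)"
  proof (intro sum.cong refl)
    fix b c
    have "(\<Sum>a<n. Gm n y b a * v a) * Hd y i b c * P c = (\<Sum>a<n. Gm n y b a * v a * Hd y i b c * P c)"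
      by (simp only: sum_distrib_right)
    also have "\<dots> = (\<Sum>a<n. v a * Gm n y a b * Hd y i b c * P c)"
    proof (rule sum.cong[OF refl])
      fix a show "Gm n y b a * v a * Hd y i b c * P c = v a * Gm n y a b * Hd y i b c * P c"
        using Gm_sym[of n y a b] by simp
    qed
    finally have "(\<Sum>a<n. v a * Gm n y a b * Hd y i b c * P c) = (\<Sum>a<n. Gm n y b a * v a) * Hd y i b c * P c" by simp
    then show "(\<Sum>a<n. v a * Gm n y a b * Hd y i b c * P c) = P b * Hd y i b c * P c"
      unfolding P_def by simp
  qed
  finally show ?thesis .
qed

lemma S5:
  assumes i: "i < n"
  shows "(\<Sum>b<n. \<Sum>c<n. P b * Hd y i b c * P c) = - 2 * (P i * (\<Sum>c<n. sg i c * hmat y i c * P c))"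
proof -
  have "(\<Sum>b<n. \<Sum>c<n. P b * Hd y i b c * P c)
      = (\<Sum>b<n. \<Sum>c<n. (P b * hmat y b c * sg b c * P c) * dl i c - (P b * hmat y b c * sg b c * P c) * dl i b)"
    by (intro sum.cong refl) (simp add: Hd_def right_diff_distrib left_diff_distrib mult_ac)
  also have "\<dots> = (\<Sum>b<n. \<Sum>c<n. (P b * hmat y b c * sg b c * P c) * dl i c) - (\<Sum>b<n. \<Sum>c<n. (P b * hmat y b c * sg b c * P c) * dl i b)"
    by (simp only: sum_subtractf)
  also have "(\<Sum>b<n. \<Sum>c<n. (P b * hmat y b c * sg b c * P c) * dl i c) = (\<Sum>b<n. P b * hmat y b i * sg b i * P i)"
    using i by (simp only: sum_dl2) simp
  also have "(\<Sum>b<n. \<Sum>c<n. (P b * hmat y b c * sg b c * P c) * dl i b) = (\<Sum>c<n. \<Sum>b<n. (P b * hmat y b c * sg b c * P c) * dl i b)"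
    by (rule sum.swap)
  also have "\<dots> = (\<Sum>c<n. P i * hmat y i c * sg i c * P c)"
    using i by (simp only: sum_dl2) simp
  also have "(\<Sum>b<n. P b * hmat y b i * sg b i * P i) = - (\<Sum>c<n. P i * hmat y i c * sg i c * P c)"
  proof -
    have "(\<Sum>b<n. P b * hmat y b i * sg b i * P i) = (\<Sum>b<n. - (P i * hmat y i b * sg i b * P b))"
    proof (rule sum.cong[OF refl])
      fix b show "P b * hmat y b i * sg b i * P i = - (P i * hmat y i b * sg i b * P b)"
        using sg_anti[of b i] hmat_sym[of y b i] by simp
    qed
    then show ?thesis by (simp add: sum_negf)
  qed
  finally have "(\<Sum>b<n. \<Sum>c<n. P b * Hd y i b c * P c) = - (\<Sum>c<n. P i * hmat y i c * sg i c * P c) - (\<Sum>c<n. P i * hmat y i c * sg i c * P c)" .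
  moreover have "(\<Sum>c<n. P i * hmat y i c * sg i c * P c) = P i * (\<Sum>c<n. sg i c * hmat y i c * P c)"
    by (simp only: sum_distrib_left) (simp only: mult_ac)
  ultimately show ?thesis by simp
qed

lemma pdot_formula:
  assumes y: "y \<in> chamber n" and i: "i < n"
  shows "(1/2) * (\<Sum>a<n. \<Sum>b<n. pdiff i (\<lambda>z. gmat n z a b) y * v a * v b)
       = (\<Sum>j<n. Gm n y i j * v j) * (\<Sum>c<n. sg i c * hmat y i c * (\<Sum>j<n. Gm n y c j * v j))"
proof -
  have "(\<Sum>a<n. \<Sum>b<n. pdiff i (\<lambda>z. gmat n z a b) y * v a * v b)
      = (\<Sum>a<n. \<Sum>b<n. deriv (\<lambda>s. Gm n (y(i := y i + s)) a b) 0 * v a * v b)"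
    using Gm_deriv(2)[OF y i] by simp
  also have "\<dots> = - (\<Sum>b<n. \<Sum>c<n. (\<Sum>j<n. Gm n y b j * v j) * Hd y i b c * (\<Sum>j<n. Gm n y c j * v j))"
    by (rule S4[OF y i])
  also have "\<dots> = 2 * ((\<Sum>j<n. Gm n y i j * v j) * (\<Sum>c<n. sg i c * hmat y i c * (\<Sum>j<n. Gm n y c j * v j)))"
    using S5[OF i, of "\<lambda>l. \<Sum>j<n. Gm n y l j * v j" y] by simp
  finally show ?thesis by simp
qed

lemma conv_bdd_deriv:
  fixes f f' :: "real \<Rightarrow> real"
  assumes ts: "0 < ts"
    and d: "\<forall>t\<in>{0..<ts}. (f has_real_derivative f' t) (at t within {0..<ts})"
    and ev: "eventually (\<lambda>t. \<bar>f' t\<bar> \<le> M) (at_left ts)"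
  shows "\<exists>L. (f \<longlongrightarrow> L) (at_left ts)"
proof -
  obtain b where b: "b < ts" "\<forall>t>b. t < ts \<longrightarrow> \<bar>f' t\<bar> \<le> M"
    using ev ts unfolding eventually_at_left[OF ts] by blast
  define t1 where "t1 = max 0 ((b + ts) / 2)"
  have h1: "b < (b + ts) / 2" "(b + ts) / 2 < ts" using b by auto
  have t1: "0 \<le> t1" "b < t1" "t1 < ts" unfolding t1_def
    using h1 ts by (simp_all add: less_max_iff_disj)
  let ?S = "{t1..<ts}"
  have dS: "\<And>z. z \<in> ?S \<Longrightarrow> (f has_real_derivative f' z) (at z within ?S)"
  proof -
    fix z assume z: "z \<in> ?S"
    then have "(f has_real_derivative f' z) (at z within {0..<ts})" using d t1 by auto
    then show "(f has_real_derivative f' z) (at z within ?S)" by (rule DERIV_subset) (use t1 in auto)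
  qed
  have bS: "\<And>z. z \<in> ?S \<Longrightarrow> norm (f' z) \<le> M" using b t1 by auto
  have lip: "\<bar>f x - f z\<bar> \<le> M * \<bar>x - z\<bar>" if "x \<in> ?S" "z \<in> ?S" for x z
    using field_differentiable_bound[of ?S f f' M x z] dS bS that by auto
  have M0: "0 \<le> M" using bS[of t1] t1 by auto
  have uc: "uniformly_continuous_on ?S f"
    unfolding uniformly_continuous_on_def
  proof (intro allI impI)
    fix e :: real assume e: "0 < e"
    show "\<exists>d>0. \<forall>x\<in>?S. \<forall>x'\<in>?S. dist x' x < d \<longrightarrow> dist (f x') (f x) < e"
    proof (intro exI[of _ "e / (M + 1)"] conjI ballI impI)
      show "0 < e / (M + 1)" using e M0 by simp
      fix x x' assume xs: "x \<in> ?S" "x' \<in> ?S" and dx: "dist x' x < e / (M + 1)"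
      have "\<bar>f x' - f x\<bar> \<le> M * \<bar>x' - x\<bar>" by (rule lip[OF xs(2) xs(1)])
      also have "\<dots> \<le> (M + 1) * \<bar>x' - x\<bar>" by (simp add: mult_right_mono)
      also have "\<dots> < (M + 1) * (e / (M + 1))"
        using dx M0 by (intro mult_strict_left_mono) (auto simp: dist_real_def)
      also have "\<dots> = e" using M0 by simp
      finally show "dist (f x') (f x) < e" by (simp add: dist_real_def)
    qed
  qed
  have "ts \<in> closure ?S" using t1 by simp
  then obtain L where L: "(f \<longlongrightarrow> L) (at ts within ?S)"
    using uniformly_continuous_on_extension_at_closure[OF uc] by blast
  have "at ts within {..<ts} = at ts within ?S"
    by (rule at_within_nhd[of _ "{t1<..}"]) (use t1 in auto)
  then show ?thesis using L by auto
qed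

lemma energy_alg:
  fixes y :: "nat \<Rightarrow> real" and v P :: "nat \<Rightarrow> real"
  assumes y: "y \<in> chamber n"
    and vP: "\<And>i. i < n \<Longrightarrow> v i = (\<Sum>c<n. hmat y i c * P c)"
  defines "F \<equiv> \<lambda>i. P i * (\<Sum>c<n. sg i c * hmat y i c * P c)"
  shows "(\<Sum>a<n. \<Sum>b<n. hmat y a b * (sg a b * (v b - v a)) * P a * P b + hmat y a b * (F a * P b + P a * F b)) = 0"
proof -
  define T2 where "T2 = (\<Sum>a<n. \<Sum>b<n. hmat y a b * sg a b * v a * P a * P b)"
  have T1: "(\<Sum>a<n. \<Sum>b<n. hmat y a b * sg a b * v b * P a * P b) = - T2"
  proof -
    have "(\<Sum>a<n. \<Sum>b<n. hmat y a b * sg a b * v b * P a * P b) = (\<Sum>b<n. \<Sum>a<n. hmat y a b * sg a b * v b * P a * P b)"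
      by (rule sum.swap)
    also have "\<dots> = (\<Sum>b<n. \<Sum>a<n. - (hmat y b a * sg b a * v b * P b * P a))"
    proof (intro sum.cong refl)
      fix a b show "hmat y a b * sg a b * v b * P a * P b = - (hmat y b a * sg b a * v b * P b * P a)"
        using sg_anti[of a b] hmat_sym[of y a b] by simp
    qed
    finally show ?thesis by (simp add: T2_def sum_negf)
  qed
  have T3: "(\<Sum>a<n. \<Sum>b<n. hmat y a b * F a * P b) = T2"
  proof -
    have "(\<Sum>a<n. \<Sum>b<n. hmat y a b * F a * P b) = (\<Sum>a<n. F a * v a)"
    proof (rule sum.cong[OF refl])
      fix a assume "a \<in> {..<n}"
      then have "v a = (\<Sum>b<n. hmat y a b * P b)" using vP by simp
      then show "(\<Sum>b<n. hmat y a b * F a * P b) = F a * v a" by (simp add: sum_distrib_left mult_ac)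
    qed
    also have "\<dots> = T2" unfolding T2_def F_def
      by (intro sum.cong refl) (simp add: sum_distrib_left mult_ac)
    finally show ?thesis .
  qed
  have T4: "(\<Sum>a<n. \<Sum>b<n. hmat y a b * P a * F b) = T2"
  proof -
    have "(\<Sum>a<n. \<Sum>b<n. hmat y a b * P a * F b) = (\<Sum>b<n. \<Sum>a<n. hmat y b a * F b * P a)"
      by (subst sum.swap) (intro sum.cong refl, simp add: hmat_sym mult_ac)
    then show ?thesis using T3 by simp
  qed
  have "(\<Sum>a<n. \<Sum>b<n. hmat y a b * (sg a b * (v b - v a)) * P a * P b + hmat y a b * (F a * P b + P a * F b))
     = (\<Sum>a<n. \<Sum>b<n. hmat y a b * sg a b * v b * P a * P b) - (\<Sum>a<n. \<Sum>b<n. hmat y a b * sg a b * v a * P a * P b)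
       + (\<Sum>a<n. \<Sum>b<n. hmat y a b * F a * P b) + (\<Sum>a<n. \<Sum>b<n. hmat y a b * P a * F b)"
    by (simp add: sum.distrib sum_subtractf algebra_simps)
  then show ?thesis using T1 T3 T4 by (simp add: T2_def)
qed

lemma hmat_lip:
  fixes a x z :: real
  shows "\<bar>exp (- \<bar>a - x\<bar>) - exp (- \<bar>a - z\<bar>)\<bar> \<le> 1 - exp (- \<bar>x - z\<bar>)"
proof -
  have key: "exp (- \<bar>a - x\<bar>) - exp (- \<bar>a - z\<bar>) \<le> 1 - exp (- \<bar>x - z\<bar>)" for a x z :: real
  proof -
    have "exp (- \<bar>a - x\<bar>) * exp (- \<bar>x - z\<bar>) \<le> exp (- \<bar>a - z\<bar>)"
      by (simp flip: exp_add)
    moreover have "exp (- \<bar>a - x\<bar>) \<le> 1" by simp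
    moreover have "0 \<le> 1 - exp (- \<bar>x - z\<bar>)" by simp
    ultimately have "exp (- \<bar>a - x\<bar>) - exp (- \<bar>a - z\<bar>) \<le> exp (- \<bar>a - x\<bar>) * (1 - exp (- \<bar>x - z\<bar>))"
      by (simp add: algebra_simps)
    also have "\<dots> \<le> 1 * (1 - exp (- \<bar>x - z\<bar>))"
      by (intro mult_right_mono) simp_all
    finally show ?thesis by simp
  qed
  show ?thesis using key[of a x z] key[of a z x] by (simp add: abs_le_iff abs_minus_commute)
qed

lemma split4:
  assumes "Suc k < n"
  shows "(\<Sum>c<n. f c) = (\<Sum>c<k. f c) + f k + f (Suc k) + (\<Sum>c\<in>{Suc (Suc k)..<n}. f c)"
proof -
  have "(\<Sum>c\<in>{0..<Suc (Suc k)}. f c) + (\<Sum>c\<in>{Suc (Suc k)..<n}. f c) = (\<Sum>c\<in>{0..<n}. f c)"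
    by (rule sum.atLeastLessThan_concat) (use assms in auto)
  then show ?thesis by (simp add: atLeast0LessThan)
qed

lemma sg_sum_lo:
  assumes j: "j < n"
  shows "(\<Sum>c<n. sg j c * X c) = (\<Sum>c<n. X c) - X j - 2 * (\<Sum>c<j. X c)"
proof -
  have "(\<Sum>c<n. sg j c * X c) = (\<Sum>c<n. X c - (if c = j then X c else 0) - 2 * (if c < j then X c else 0))"
    by (intro sum.cong refl) (auto simp: sg_def)
  also have "\<dots> = (\<Sum>c<n. X c) - X j - 2 * (\<Sum>c<n. (if c < j then X c else 0))"
    using j by (simp add: sum_subtractf sum_distrib_left)
  also have "(\<Sum>c<n. (if c < j then X c else 0)) = (\<Sum>c<j. X c)"
  proof -
    have "{c\<in>{..<n}. c < j} = {..<j}" using j by auto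
    then show ?thesis by (simp add: sum.inter_filter[symmetric])
  qed
  finally show ?thesis .
qed

lemma sg_sum_hi:
  assumes j: "j < n"
  shows "(\<Sum>c<n. sg j c * X c) = - (\<Sum>c<n. X c) + X j + 2 * (\<Sum>c\<in>{Suc j..<n}. X c)"
proof -
  have "(\<Sum>c<n. sg j c * X c) = (\<Sum>c<n. - X c + (if c = j then X c else 0) + 2 * (if j < c then X c else 0))"
    by (intro sum.cong refl) (auto simp: sg_def)
  also have "\<dots> = (\<Sum>c<n. - X c) + (\<Sum>c<n. (if c = j then X c else 0)) + (\<Sum>c<n. 2 * (if j < c then X c else 0))"
    by (simp only: sum.distrib)
  also have "\<dots> = - (\<Sum>c<n. X c) + X j + 2 * (\<Sum>c<n. (if j < c then X c else 0))"
    using j by (simp add: sum_negf sum_distrib_left)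
  also have "(\<Sum>c<n. (if j < c then X c else 0)) = (\<Sum>c\<in>{Suc j..<n}. X c)"
  proof -
    have "{c\<in>{..<n}. j < c} = {Suc j..<n}" by auto
    then show ?thesis by (simp add: sum.inter_filter[symmetric])
  qed
  finally show ?thesis .
qed

locale gs =
  fixes n k :: nat and ts :: real and q qd p :: "real \<Rightarrow> nat \<Rightarrow> real" and qs :: "nat \<Rightarrow> real"
  assumes kn: "Suc k < n" and ts: "0 < ts" and geo: "geodesic n ts q qd p"
    and ord: "\<forall>t\<in>{0..<ts}. q t \<in> chamber n"
    and lim: "\<forall>i<n. ((\<lambda>t. q t i) \<longlongrightarrow> qs i) (at_left ts)"
    and sing: "qs k = qs (Suc k)"
    and dist: "\<forall>i<n. \<forall>j<n. i \<noteq> j \<and> \<not> ({i, j} = {k, Suc k}) \<longrightarrow> qs i \<noteq> qs j"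
begin

abbreviation "I \<equiv> {0..<ts}"

lemma n0: "0 < n" using kn by simp

lemma ch: "t \<in> I \<Longrightarrow> q t \<in> chamber n" using ord by blast

lemma p_eq: "t \<in> I \<Longrightarrow> i < n \<Longrightarrow> p t i = (\<Sum>j<n. Gm n (q t) i j * qd t j)"
  using geo ch unfolding geodesic_def by (simp add: gmat_eq)

lemma qd_eq: "t \<in> I \<Longrightarrow> i < n \<Longrightarrow> qd t i = (\<Sum>c<n. hmat (q t) i c * p t c)"
  using v_hp[OF ch, of t i "qd t"] p_eq by simp

definition Fp :: "real \<Rightarrow> nat \<Rightarrow> real" where
  "Fp t i = p t i * (\<Sum>c<n. sg i c * hmat (q t) i c * p t c)"

lemma p_der: "t \<in> I \<Longrightarrow> i < n \<Longrightarrow> ((\<lambda>s. p s i) has_real_derivative Fp t i) (at t within I)"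
proof -
  assume t: "t \<in> I" and i: "i < n"
  have "((\<lambda>s. p s i) has_real_derivative
           ((1/2) * (\<Sum>a<n. \<Sum>b<n. pdiff i (\<lambda>y. gmat n y a b) (q t) * qd t a * qd t b))) (at t within I)"
    using geo t i unfolding geodesic_def by blast
  moreover have "(1/2) * (\<Sum>a<n. \<Sum>b<n. pdiff i (\<lambda>y. gmat n y a b) (q t) * qd t a * qd t b) = Fp t i"
  proof -
    have "(\<Sum>c<n. sg i c * hmat (q t) i c * p t c) = (\<Sum>c<n. sg i c * hmat (q t) i c * (\<Sum>j<n. Gm n (q t) c j * qd t j))"
      by (intro sum.cong refl) (simp add: p_eq[OF t])
    then show ?thesis unfolding Fp_def using pdot_formula[OF ch[OF t] i, of "qd t"] p_eq[OF t i] by simp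
  qed
  ultimately show ?thesis by simp
qed

lemma q_der: "t \<in> I \<Longrightarrow> i < n \<Longrightarrow> ((\<lambda>s. q s i) has_real_derivative qd t i) (at t within I)"
  using geo unfolding geodesic_def by blast

definition En :: "real \<Rightarrow> real" where "En t = Bf n (q t) (qd t) (qd t)"

definition Eh :: "real \<Rightarrow> real" where
  "Eh s = (\<Sum>a<n. \<Sum>b<n. exp (sg a b * (q s b - q s a)) * p s a * p s b)"

lemma En_Eh: "t \<in> I \<Longrightarrow> En t = Eh t"
proof -
  assume t: "t \<in> I"
  have "En t = (\<Sum>a<n. p t a * qd t a)"
    unfolding En_def using p_Bf[OF n0, of "q t" "qd t" "qd t"] p_eq[OF t] by simp
  also have "\<dots> = (\<Sum>a<n. \<Sum>b<n. hmat (q t) a b * p t a * p t b)"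
    using qd_eq[OF t] by (intro sum.cong refl) (simp add: sum_distrib_left mult_ac)
  also have "\<dots> = Eh t" unfolding Eh_def
    by (intro sum.cong refl) (simp add: hmat_ch[OF ch[OF t]])
  finally show ?thesis .
qed

lemma Eh_der: "t \<in> I \<Longrightarrow> (Eh has_real_derivative 0) (at t within I)"
proof -
  assume t: "t \<in> I"
  let ?h = "\<lambda>a b. hmat (q t) a b"
  have d: "((\<lambda>s. exp (sg a b * (q s b - q s a)) * p s a * p s b) has_real_derivative
      ?h a b * (sg a b * (qd t b - qd t a)) * p t a * p t b + ?h a b * (Fp t a * p t b + p t a * Fp t b)) (at t within I)"
    if "a < n" "b < n" for a b
  proof -
    have e: "exp (sg a b * (q t b - q t a)) = ?h a b" using hmat_ch[OF ch[OF t] that] by simp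
    have "((\<lambda>s. exp (sg a b * (q s b - q s a)) * p s a * p s b) has_real_derivative
      (exp (sg a b * (q t b - q t a)) * (sg a b * (qd t b - qd t a)) * p t a + exp (sg a b * (q t b - q t a)) * Fp t a) * p t b
        + exp (sg a b * (q t b - q t a)) * p t a * Fp t b) (at t within I)"
    proof -
      have dq: "((\<lambda>s. sg a b * (q s b - q s a)) has_real_derivative sg a b * (qd t b - qd t a)) (at t within I)"
        using q_der[OF t] that by (intro DERIV_cmult DERIV_diff) auto
      have de: "((\<lambda>s. exp (sg a b * (q s b - q s a))) has_real_derivative exp (sg a b * (q t b - q t a)) * (sg a b * (qd t b - qd t a))) (at t within I)"
        using q_der[OF t] that by (auto intro!: derivative_eq_intros)
      show ?thesis using DERIV_mult[OF DERIV_mult[OF de p_der[OF t that(1)]] p_der[OF t that(2)]] by (simp add: mult_ac)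
    qed
    then show ?thesis using e by (simp add: algebra_simps)
  qed
  have "(Eh has_real_derivative (\<Sum>a<n. \<Sum>b<n. ?h a b * (sg a b * (qd t b - qd t a)) * p t a * p t b + ?h a b * (Fp t a * p t b + p t a * Fp t b))) (at t within I)"
    unfolding Eh_def using d by (intro DERIV_sum) auto
  moreover have "(\<Sum>a<n. \<Sum>b<n. ?h a b * (sg a b * (qd t b - qd t a)) * p t a * p t b + ?h a b * (Fp t a * p t b + p t a * Fp t b)) = 0"
    using energy_alg[OF ch[OF t], of "qd t" "p t"] qd_eq[OF t] unfolding Fp_def by simp
  ultimately show ?thesis by simp
qed

definition E0 where "E0 = En 0"

lemma En_const: "t \<in> I \<Longrightarrow> En t = E0"
proof -
  obtain c where c: "\<forall>x\<in>I. Eh x = c"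
    using has_field_derivative_zero_constant[of I Eh] Eh_der by (auto simp: convex_real_interval)
  assume t: "t \<in> I"
  have 0: "0 \<in> I" using ts by simp
  show ?thesis using c t 0 En_Eh[OF t] En_Eh[OF 0] unfolding E0_def by simp
qed

lemma E0_nonneg: "0 \<le> E0"
proof -
  have 0: "0 \<in> I" using ts by simp
  show ?thesis unfolding E0_def En_def by (rule Bf_nonneg[OF ch[OF 0] n0])
qed

lemma CS_t: "t \<in> I \<Longrightarrow> (\<Sum>i<n. p t i * U i)^2 \<le> Bf n (q t) U U * E0"
  using CS_p[OF ch n0, of t "qd t" U] p_eq En_const[unfolded En_def] by simp

lemma qd_bound: "t \<in> I \<Longrightarrow> i < n \<Longrightarrow> (qd t i)^2 \<le> E0"
  using vel_bound[OF ch, of t i "qd t"] En_const[unfolded En_def] by simp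

end

context gs begin

abbreviation "Fl \<equiv> at_left ts"

lemma evI: "eventually (\<lambda>t. t \<in> I) Fl"
  using eventually_at_left_real[OF ts] by eventually_elim auto

lemma qs_dist: "Suc r < n \<Longrightarrow> r \<noteq> k \<Longrightarrow> qs r \<noteq> qs (Suc r)"
proof -
  assume r: "Suc r < n" "r \<noteq> k"
  have "{r, Suc r} \<noteq> {k, Suc k}"
  proof
    assume "{r, Suc r} = {k, Suc k}"
    then have "r \<in> {k, Suc k}" "Suc r \<in> {k, Suc k}" by auto
    then show False using r by auto
  qed
  then show ?thesis using dist r by auto
qed

lemma Bk_lim: "((\<lambda>t. Bk n k (q t) U U) \<longlongrightarrow> Bk n k qs U U) Fl"
  using Bk_tendsto[of n q qs Fl "\<lambda>_. U" U "\<lambda>_. U" U k] lim n0 kn qs_dist by auto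

lemma ee_lim: "((\<lambda>t. ee (q t) k) \<longlongrightarrow> 1) Fl"
proof -
  have "((\<lambda>t. ee (q t) k) \<longlongrightarrow> ee qs k) Fl" unfolding ee_def
    using lim kn by (intro tendsto_intros) auto
  then show ?thesis using sing by (simp add: ee_def)
qed

lemma frac1: "0 < (e::real) \<Longrightarrow> e < 1 \<Longrightarrow> (1 - e)^2 / (1 - e^2) \<le> 1"
proof -
  assume e: "0 < e" "e < 1"
  have "e^2 < 1" using e by (simp add: power_less_one_iff abs_less_iff)
  then have pos: "0 < 1 - e^2" by simp
  have "(1 - e)^2 \<le> 1 - e^2" using e by (simp add: power2_eq_square algebra_simps)
  then show ?thesis using pos by simp
qed

lemma frac2: "0 < (e::real) \<Longrightarrow> e < 1 \<Longrightarrow> (1 - e)^2 * ((1 + e)^2 / (1 - e^2)) = 1 - e^2"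
proof -
  assume e: "0 < e" "e < 1"
  have "e^2 < 1" using e by (simp add: power_less_one_iff abs_less_iff)
  then have pos: "1 - e^2 \<noteq> 0" by simp
  have "(1 - e)^2 * (1 + e)^2 = (1 - e^2) * (1 - e^2)" by (simp add: power2_eq_square algebra_simps)
  then show ?thesis using pos by (simp add: field_simps)
qed

lemma sq_le_abs: "x^2 \<le> y \<Longrightarrow> \<bar>x\<bar> \<le> sqrt y"
  using real_le_rsqrt[of "\<bar>x\<bar>" y] by simp

lemma bound_a: "t \<in> I \<Longrightarrow> c < n \<Longrightarrow> c \<noteq> k \<Longrightarrow> c \<noteq> Suc k \<Longrightarrow> (p t c)^2 \<le> E0 * Bk n k (q t) (dl c) (dl c)"
proof -
  assume t: "t \<in> I" and c: "c < n" "c \<noteq> k" "c \<noteq> Suc k"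
  have "ell (q t) k (dl c) = 0" using c by (simp add: ell_def dl_def)
  then have "Bf n (q t) (dl c) (dl c) = Bk n k (q t) (dl c) (dl c)" using Bf_split[OF kn] by (simp add: Tm_def)
  moreover have "(\<Sum>i<n. p t i * dl c i) = p t c" using c by (simp add: sum_dl2)
  ultimately show ?thesis using CS_t[OF t, of "dl c"] by (simp add: mult.commute)
qed

definition uP :: "nat \<Rightarrow> real" where "uP = (\<lambda>i. dl k i + dl (Suc k) i)"
definition uD :: "nat \<Rightarrow> real" where "uD = (\<lambda>i. dl k i - dl (Suc k) i)"

lemma sum_uP: "(\<Sum>i<n. p t i * uP i) = p t k + p t (Suc k)"
  using kn by (simp add: uP_def distrib_left sum.distrib sum_dl2)

lemma sum_uD: "(\<Sum>i<n. p t i * uD i) = p t k - p t (Suc k)"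
  using kn by (simp add: uD_def right_diff_distrib sum_subtractf sum_dl2)

lemma bound_b: "t \<in> I \<Longrightarrow> (p t k + p t (Suc k))^2 \<le> E0 * (Bk n k (q t) uP uP + 1)"
proof -
  assume t: "t \<in> I"
  let ?e = "ee (q t) k"
  have e: "0 < ?e" "?e < 1" using ee_pos ee_lt1[OF ch[OF t] kn] by auto
  have "Tm (q t) uP uP k = (1 - ?e)^2 / (1 - ?e^2)"
    by (simp add: Tm_def ell_def uP_def dl_def power2_eq_square)
  also have "\<dots> \<le> 1" using frac1[OF e] .
  finally have "Bf n (q t) uP uP \<le> Bk n k (q t) uP uP + 1" using Bf_split[OF kn] by simp
  then have "Bf n (q t) uP uP * E0 \<le> (Bk n k (q t) uP uP + 1) * E0"
    using E0_nonneg by (rule mult_right_mono)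
  then show ?thesis using CS_t[OF t, of uP] sum_uP by (simp add: mult.commute)
qed

lemma bound_c: "t \<in> I \<Longrightarrow> ((1 - ee (q t) k) * (p t k - p t (Suc k)))^2
    \<le> E0 * ((1 - ee (q t) k)^2 * Bk n k (q t) uD uD + (1 - (ee (q t) k)^2))"
proof -
  assume t: "t \<in> I"
  let ?e = "ee (q t) k"
  have e: "0 < ?e" "?e < 1" using ee_pos ee_lt1[OF ch[OF t] kn] by auto
  have "Tm (q t) uD uD k = (1 + ?e)^2 / (1 - ?e^2)"
    by (simp add: Tm_def ell_def uD_def dl_def power2_eq_square algebra_simps)
  then have "(1 - ?e)^2 * Tm (q t) uD uD k = 1 - ?e^2"
    using frac2[OF e] by simp
  then have B: "(1 - ?e)^2 * Bf n (q t) uD uD = (1 - ?e)^2 * Bk n k (q t) uD uD + (1 - ?e^2)"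
    using Bf_split[OF kn] by (simp add: algebra_simps)
  have "((1 - ?e) * (p t k - p t (Suc k)))^2 = (1 - ?e)^2 * (p t k - p t (Suc k))^2"
    by (simp add: power_mult_distrib)
  also have "\<dots> \<le> (1 - ?e)^2 * (Bf n (q t) uD uD * E0)"
    using CS_t[OF t, of uD] sum_uD by (intro mult_left_mono) auto
  also have "\<dots> = E0 * ((1 - ?e)^2 * Bf n (q t) uD uD)" by (simp only: mult_ac)
  also have "\<dots> = E0 * ((1 - ?e)^2 * Bk n k (q t) uD uD + (1 - ?e^2))"
    using B by (simp only:)
  finally show ?thesis .
qed

lemma D_lim: "((\<lambda>t. (1 - ee (q t) k) * (p t k - p t (Suc k))) \<longlongrightarrow> 0) Fl"
proof (rule Lim_null_comparison)
  let ?g = "\<lambda>t. sqrt (E0 * ((1 - ee (q t) k)^2 * Bk n k (q t) uD uD + (1 - (ee (q t) k)^2)))"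
  show "eventually (\<lambda>t. norm ((1 - ee (q t) k) * (p t k - p t (Suc k))) \<le> ?g t) Fl"
    using evI by eventually_elim (use bound_c sq_le_abs in auto)
  have "(?g \<longlongrightarrow> sqrt (E0 * ((1 - 1)^2 * Bk n k qs uD uD + (1 - 1^2)))) Fl"
    using ee_lim Bk_lim by (intro tendsto_intros)
  then show "(?g \<longlongrightarrow> 0) Fl" by simp
qed

end

lemma hmat_le1: "hmat y a b \<le> 1" by (simp add: hmat_def)
lemma hmat_pos: "0 < hmat y a b" by (simp add: hmat_def)

lemma P_ident:
  fixes y v P :: "nat \<Rightarrow> real"
  assumes y: "y \<in> chamber n" and kn: "Suc k < n"
    and vP: "\<And>i. i < n \<Longrightarrow> v i = (\<Sum>c<n. hmat y i c * P c)"
  defines "A \<equiv> (\<Sum>c<k. hmat y k c * P c)"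
  defines "B \<equiv> (\<Sum>c\<in>{Suc (Suc k)..<n}. hmat y (Suc k) c * P c)"
  defines "e \<equiv> hmat y k (Suc k)"
  shows "P k * (\<Sum>c<n. sg k c * hmat y k c * P c) + P (Suc k) * (\<Sum>c<n. sg (Suc k) c * hmat y (Suc k) c * P c)
     = - A * (v k - A - e * B) + B * (v (Suc k) - e * A - B)"
proof -
  have k1: "k < n" using kn by simp
  have lo: "hmat y (Suc k) c = e * hmat y k c" if "c < k" for c
  proof -
    have "hmat y (Suc k) c = exp (y (Suc k) - y c)" using hmat_ch[OF y kn, of c] that kn by (simp add: sg_def)
    moreover have "hmat y k c = exp (y k - y c)" using hmat_ch[OF y k1, of c] that kn by (simp add: sg_def)
    moreover have "e = exp (y (Suc k) - y k)" using hmat_ch[OF y k1 kn] by (simp add: e_def sg_def)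
    ultimately show ?thesis by (simp flip: exp_add)
  qed
  have hi: "hmat y k c = e * hmat y (Suc k) c" if "c \<in> {Suc (Suc k)..<n}" for c
  proof -
    have c: "c < n" using that by simp
    have "hmat y (Suc k) c = exp (y c - y (Suc k))" using hmat_ch[OF y kn c] that by (simp add: sg_def)
    moreover have "hmat y k c = exp (y c - y k)" using hmat_ch[OF y k1 c] that by (simp add: sg_def)
    moreover have "e = exp (y (Suc k) - y k)" using hmat_ch[OF y k1 kn] by (simp add: e_def sg_def)
    ultimately show ?thesis by (simp flip: exp_add)
  qed
  have eA: "(\<Sum>c<k. hmat y (Suc k) c * P c) = e * A"
    unfolding A_def sum_distrib_left by (intro sum.cong refl) (simp add: lo)
  have eB: "(\<Sum>c\<in>{Suc (Suc k)..<n}. hmat y k c * P c) = e * B"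
    unfolding B_def sum_distrib_left by (intro sum.cong refl) (simp add: hi)
  have ek: "hmat y (Suc k) k = e" by (simp add: e_def hmat_sym)
  have Sk: "(\<Sum>c<n. sg k c * hmat y k c * P c) = - A + e * P (Suc k) + e * B"
  proof -
    have 1: "(\<Sum>c<k. sg k c * hmat y k c * P c) = - A"
      unfolding A_def by (simp add: sum_negf[symmetric] sg_def)
    have 2: "(\<Sum>c\<in>{Suc (Suc k)..<n}. sg k c * hmat y k c * P c) = e * B"
      using eB by (simp add: sg_def)
    show ?thesis using split4[OF kn, of "\<lambda>c. sg k c * hmat y k c * P c"] 1 2 by (simp add: sg_def e_def)
  qed
  have Sk1: "(\<Sum>c<n. sg (Suc k) c * hmat y (Suc k) c * P c) = - (e * A) - e * P k + B"
  proof -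
    have 1: "(\<Sum>c<k. sg (Suc k) c * hmat y (Suc k) c * P c) = - (e * A)"
    proof -
      have "(\<Sum>c<k. sg (Suc k) c * hmat y (Suc k) c * P c) = (\<Sum>c<k. - (hmat y (Suc k) c * P c))"
        by (intro sum.cong refl) (simp add: sg_def)
      then show ?thesis using eA by (simp add: sum_negf)
    qed
    have 2: "(\<Sum>c\<in>{Suc (Suc k)..<n}. sg (Suc k) c * hmat y (Suc k) c * P c) = B"
      unfolding B_def by (simp add: sg_def)
    show ?thesis using split4[OF kn, of "\<lambda>c. sg (Suc k) c * hmat y (Suc k) c * P c"] 1 2 ek by (simp add: sg_def)
  qed
  have vk: "v k = A + P k + e * P (Suc k) + e * B"
    using vP[OF k1] split4[OF kn, of "\<lambda>c. hmat y k c * P c"] eB by (simp add: A_def e_def hmat_diag)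
  have vk1: "v (Suc k) = e * A + e * P k + P (Suc k) + B"
    using vP[OF kn] split4[OF kn, of "\<lambda>c. hmat y (Suc k) c * P c"] eA ek by (simp add: B_def hmat_diag)
  show ?thesis unfolding Sk Sk1 vk vk1 by (simp add: algebra_simps)
qed

context gs begin

definition Lc :: "nat \<Rightarrow> real" where "Lc c = Bk n k qs (dl c) (dl c)"

definition Mb :: real where
  "Mb = sqrt E0 + (\<Sum>c<n. sqrt (E0 * (\<bar>Lc c\<bar> + 1))) + sqrt (E0 * (\<bar>Bk n k qs uP uP\<bar> + 1 + 1))"

lemma Mb_nonneg: "0 \<le> Mb"
  unfolding Mb_def using E0_nonneg by (intro add_nonneg_nonneg sum_nonneg) auto

definition good :: "real \<Rightarrow> bool" where
  "good t \<longleftrightarrow> t \<in> I \<and> (\<forall>c<n. c \<noteq> k \<and> c \<noteq> Suc k \<longrightarrow> \<bar>p t c\<bar> \<le> Mb) \<and>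
     \<bar>p t k + p t (Suc k)\<bar> \<le> Mb \<and> (\<forall>i<n. \<bar>qd t i\<bar> \<le> Mb)"

lemma ev_lt1: "(f \<longlongrightarrow> (L::real)) F \<Longrightarrow> eventually (\<lambda>t. f t \<le> \<bar>L\<bar> + 1) F"
proof -
  assume "(f \<longlongrightarrow> L) F"
  then have "eventually (\<lambda>t. dist (f t) L < 1) F" by (rule tendstoD) simp
  then show ?thesis by eventually_elim (auto simp: dist_real_def)
qed

lemma ev_good: "eventually good Fl"
proof -
  have e1: "eventually (\<lambda>t. \<forall>c\<in>{..<n}. Bk n k (q t) (dl c) (dl c) \<le> \<bar>Lc c\<bar> + 1) Fl"
    by (rule eventually_ball_finite) (auto simp: Lc_def intro: ev_lt1[OF Bk_lim])
  have e2: "eventually (\<lambda>t. Bk n k (q t) uP uP \<le> \<bar>Bk n k qs uP uP\<bar> + 1) Fl"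
    by (rule ev_lt1[OF Bk_lim])
  have sE: "sqrt E0 \<le> Mb" unfolding Mb_def using E0_nonneg
    by (simp, intro add_nonneg_nonneg sum_nonneg) auto
  show ?thesis using evI e1 e2
  proof eventually_elim
    case (elim t)
    note t = elim(1)
    have A: "\<bar>p t c\<bar> \<le> Mb" if c: "c < n" "c \<noteq> k" "c \<noteq> Suc k" for c
    proof -
      have "\<bar>p t c\<bar> \<le> sqrt (E0 * Bk n k (q t) (dl c) (dl c))" using bound_a[OF t c] by (rule sq_le_abs)
      also have "\<dots> \<le> sqrt (E0 * (\<bar>Lc c\<bar> + 1))"
        using elim(2) c E0_nonneg by (auto intro!: mult_left_mono)
      also have "\<dots> \<le> (\<Sum>c<n. sqrt (E0 * (\<bar>Lc c\<bar> + 1)))"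
        using c E0_nonneg by (intro member_le_sum) auto
      also have "\<dots> \<le> Mb" unfolding Mb_def using E0_nonneg by simp
      finally show ?thesis .
    qed
    have B: "\<bar>p t k + p t (Suc k)\<bar> \<le> Mb"
    proof -
      have "\<bar>p t k + p t (Suc k)\<bar> \<le> sqrt (E0 * (Bk n k (q t) uP uP + 1))" using bound_b[OF t] by (rule sq_le_abs)
      also have "\<dots> \<le> sqrt (E0 * (\<bar>Bk n k qs uP uP\<bar> + 1 + 1))"
        using elim(3) E0_nonneg by (auto intro!: mult_left_mono)
      also have "\<dots> \<le> Mb" unfolding Mb_def using E0_nonneg
        by (simp, intro add_nonneg_nonneg sum_nonneg) auto
      finally show ?thesis .
    qed
    have C: "\<bar>qd t i\<bar> \<le> Mb" if "i < n" for i
      using sq_le_abs[OF qd_bound[OF t that]] sE by simp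
    show ?case unfolding good_def using t A B C by auto
  qed
qed

end

context gs begin

lemma sum_hp_bound:
  assumes g: "good t" and A: "A \<subseteq> {..<n}" and Ak: "\<forall>c\<in>A. c \<noteq> k \<and> c \<noteq> Suc k"
  shows "\<bar>\<Sum>c\<in>A. hmat (q t) i c * p t c\<bar> \<le> real n * Mb"
proof -
  have fin: "finite A" using A finite_subset by blast
  have "\<bar>\<Sum>c\<in>A. hmat (q t) i c * p t c\<bar> \<le> (\<Sum>c\<in>A. \<bar>hmat (q t) i c * p t c\<bar>)" by (rule sum_abs)
  also have "\<dots> \<le> (\<Sum>c\<in>A. Mb)"
  proof (rule sum_mono)
    fix c assume c: "c \<in> A"
    have "\<bar>p t c\<bar> \<le> Mb" using g c A Ak unfolding good_def by auto
    moreover have "\<bar>hmat (q t) i c\<bar> \<le> 1" using hmat_le1 hmat_pos by (simp add: abs_le_iff) (meson less_le_trans neg_less_0_iff_less zero_less_one hmat_pos less_imp_le)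
    ultimately show "\<bar>hmat (q t) i c * p t c\<bar> \<le> Mb"
      by (simp add: abs_mult) (metis abs_ge_zero mult_le_one mult_mono order_trans mult_1 mult.commute)
  qed
  also have "\<dots> = real (card A) * Mb" by simp
  also have "\<dots> \<le> real n * Mb"
  proof -
    have "card A \<le> card {..<n}" using A by (intro card_mono) auto
    then show ?thesis using Mb_nonneg by (intro mult_right_mono) auto
  qed
  finally show ?thesis .
qed

lemma Fp_bound_j:
  assumes g: "good t" and j: "j < n" "j \<noteq> k" "j \<noteq> Suc k"
  shows "\<bar>Fp t j\<bar> \<le> Mb * (2 * Mb + 2 * (real n * Mb))"
proof -
  have t: "t \<in> I" using g by (simp add: good_def)
  let ?X = "\<lambda>c. hmat (q t) j c * p t c"
  have S: "(\<Sum>c<n. sg j c * hmat (q t) j c * p t c) = (\<Sum>c<n. sg j c * ?X c)" by (simp add: mult.assoc)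
  have qj: "(\<Sum>c<n. ?X c) = qd t j" using qd_eq[OF t j(1)] by simp
  have Xj: "?X j = p t j" by (simp add: hmat_diag)
  have bS: "\<bar>\<Sum>c<n. sg j c * ?X c\<bar> \<le> 2 * Mb + 2 * (real n * Mb)"
  proof (cases "j < k")
    case True
    have "\<bar>\<Sum>c<j. ?X c\<bar> \<le> real n * Mb" using True j by (intro sum_hp_bound[OF g]) auto
    moreover have "\<bar>qd t j\<bar> \<le> Mb" "\<bar>p t j\<bar> \<le> Mb" using g j unfolding good_def by auto
    ultimately show ?thesis unfolding sg_sum_lo[OF j(1)] qj Xj by linarith
  next
    case False
    then have jk: "Suc k < j" using j by simp
    have "\<bar>\<Sum>c\<in>{Suc j..<n}. ?X c\<bar> \<le> real n * Mb" using jk j by (intro sum_hp_bound[OF g]) auto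
    moreover have "\<bar>qd t j\<bar> \<le> Mb" "\<bar>p t j\<bar> \<le> Mb" using g j unfolding good_def by auto
    ultimately show ?thesis unfolding sg_sum_hi[OF j(1)] qj Xj by linarith
  qed
  have pj: "\<bar>p t j\<bar> \<le> Mb" using g j unfolding good_def by auto
  have "\<bar>Fp t j\<bar> = \<bar>p t j\<bar> * \<bar>\<Sum>c<n. sg j c * ?X c\<bar>" unfolding Fp_def S by (simp add: abs_mult)
  also have "\<dots> \<le> Mb * (2 * Mb + 2 * (real n * Mb))"
    using pj bS by (intro mult_mono) auto
  finally show ?thesis .
qed

lemma Fp_bound_P:
  assumes g: "good t"
  shows "\<bar>Fp t k + Fp t (Suc k)\<bar> \<le> 2 * ((real n * Mb) * (Mb + 2 * (real n * Mb)))"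
proof -
  have t: "t \<in> I" using g by (simp add: good_def)
  define A where "A = (\<Sum>c<k. hmat (q t) k c * p t c)"
  define B where "B = (\<Sum>c\<in>{Suc (Suc k)..<n}. hmat (q t) (Suc k) c * p t c)"
  define e where "e = hmat (q t) k (Suc k)"
  have id: "Fp t k + Fp t (Suc k) = - A * (qd t k - A - e * B) + B * (qd t (Suc k) - e * A - B)"
    unfolding Fp_def A_def B_def e_def by (rule P_ident[OF ch[OF t] kn qd_eq[OF t]])
  have bA: "\<bar>A\<bar> \<le> real n * Mb" unfolding A_def using kn by (intro sum_hp_bound[OF g]) auto
  have bB: "\<bar>B\<bar> \<le> real n * Mb" unfolding B_def by (intro sum_hp_bound[OF g]) auto
  have e: "0 \<le> e" "e \<le> 1" unfolding e_def using hmat_le1 hmat_pos[of "q t" k "Suc k"] by auto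
  have v: "\<bar>qd t k\<bar> \<le> Mb" "\<bar>qd t (Suc k)\<bar> \<le> Mb" using g kn unfolding good_def by auto
  have eB: "\<bar>e * B\<bar> \<le> real n * Mb" using e bB by (simp add: abs_mult) (metis abs_ge_zero mult_le_one mult_mono order_trans mult_1 mult.commute)
  have eA: "\<bar>e * A\<bar> \<le> real n * Mb" using e bA by (simp add: abs_mult) (metis abs_ge_zero mult_le_one mult_mono order_trans mult_1 mult.commute)
  have 1: "\<bar>- A * (qd t k - A - e * B)\<bar> \<le> (real n * Mb) * (Mb + 2 * (real n * Mb))"
  proof -
    have "\<bar>qd t k - A - e * B\<bar> \<le> Mb + 2 * (real n * Mb)" using v bA eB by linarith
    then show ?thesis using bA by (simp add: abs_mult) (intro mult_mono, auto)
  qed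
  have 2: "\<bar>B * (qd t (Suc k) - e * A - B)\<bar> \<le> (real n * Mb) * (Mb + 2 * (real n * Mb))"
  proof -
    have "\<bar>qd t (Suc k) - e * A - B\<bar> \<le> Mb + 2 * (real n * Mb)" using v bB eA by linarith
    then show ?thesis using bB by (simp add: abs_mult) (intro mult_mono, auto)
  qed
  show ?thesis unfolding id using 1 2 by linarith
qed

lemma lim_pj: "j < n \<Longrightarrow> j \<noteq> k \<Longrightarrow> j \<noteq> Suc k \<Longrightarrow> \<exists>L. ((\<lambda>t. p t j) \<longlongrightarrow> L) Fl"
proof -
  assume j: "j < n" "j \<noteq> k" "j \<noteq> Suc k"
  show ?thesis
  proof (rule conv_bdd_deriv[OF ts])
    show "\<forall>t\<in>I. ((\<lambda>t. p t j) has_real_derivative Fp t j) (at t within I)" using p_der j by blast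
    show "eventually (\<lambda>t. \<bar>Fp t j\<bar> \<le> Mb * (2 * Mb + 2 * (real n * Mb))) Fl"
      using ev_good by eventually_elim (rule Fp_bound_j[OF _ j])
  qed
qed

lemma lim_P: "\<exists>L. ((\<lambda>t. p t k + p t (Suc k)) \<longlongrightarrow> L) Fl"
proof (rule conv_bdd_deriv[OF ts])
  show "\<forall>t\<in>I. ((\<lambda>t. p t k + p t (Suc k)) has_real_derivative Fp t k + Fp t (Suc k)) (at t within I)"
    using p_der kn by (auto intro: DERIV_add)
  show "eventually (\<lambda>t. \<bar>Fp t k + Fp t (Suc k)\<bar> \<le> 2 * ((real n * Mb) * (Mb + 2 * (real n * Mb)))) Fl"
    using ev_good by eventually_elim (rule Fp_bound_P)
qed

end

context gs begin

lemma hmat_lim: "i < n \<Longrightarrow> c < n \<Longrightarrow> ((\<lambda>t. hmat (q t) i c) \<longlongrightarrow> hmat qs i c) Fl"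
  unfolding hmat_def using lim by (intro tendsto_intros) auto

lemma qd_decomp:
  assumes t: "t \<in> I" and i: "i < n"
  shows "qd t i = (\<Sum>c<k. hmat (q t) i c * p t c) + (\<Sum>c\<in>{Suc (Suc k)..<n}. hmat (q t) i c * p t c)
     + ((hmat (q t) i k + hmat (q t) i (Suc k)) / 2) * (p t k + p t (Suc k))
     + ((hmat (q t) i k - hmat (q t) i (Suc k)) / 2) * (p t k - p t (Suc k))"
proof -
  have e: "hmat (q t) i k * p t k + hmat (q t) i (Suc k) * p t (Suc k) =
     ((hmat (q t) i k + hmat (q t) i (Suc k)) / 2) * (p t k + p t (Suc k))
     + ((hmat (q t) i k - hmat (q t) i (Suc k)) / 2) * (p t k - p t (Suc k))"
    by (simp add: field_simps)
  show ?thesis using qd_eq[OF t i] split4[OF kn, of "\<lambda>c. hmat (q t) i c * p t c"] e by linarith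
qed

lemma diff_term_lim: "i < n \<Longrightarrow>
  ((\<lambda>t. ((hmat (q t) i k - hmat (q t) i (Suc k)) / 2) * (p t k - p t (Suc k))) \<longlongrightarrow> 0) Fl"
proof -
  assume i: "i < n"
  let ?g = "\<lambda>t. \<bar>(1 - ee (q t) k) * (p t k - p t (Suc k))\<bar>"
  have g: "(?g \<longlongrightarrow> 0) Fl" using tendsto_rabs_zero[OF D_lim] .
  show ?thesis
  proof (rule Lim_null_comparison[OF _ g])
    show "eventually (\<lambda>t. norm (((hmat (q t) i k - hmat (q t) i (Suc k)) / 2) * (p t k - p t (Suc k))) \<le> ?g t) Fl"
      using evI
    proof eventually_elim
      case (elim t)
      have y: "q t \<in> chamber n" using ch[OF elim] .
      have "exp (- \<bar>q t k - q t (Suc k)\<bar>) = ee (q t) k"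
        using chamberD[OF y, of k "Suc k"] kn by (simp add: ee_def)
      then have hb: "\<bar>hmat (q t) i k - hmat (q t) i (Suc k)\<bar> \<le> 1 - ee (q t) k"
        using hmat_lip[of "q t i" "q t k" "q t (Suc k)"] by (simp add: hmat_def)
      have e1: "ee (q t) k < 1" using ee_lt1[OF y kn] .
      have a: "\<bar>(hmat (q t) i k - hmat (q t) i (Suc k)) / 2\<bar> \<le> \<bar>1 - ee (q t) k\<bar>" using hb e1 by simp
      have "\<bar>(hmat (q t) i k - hmat (q t) i (Suc k)) / 2\<bar> * \<bar>p t k - p t (Suc k)\<bar> \<le> \<bar>1 - ee (q t) k\<bar> * \<bar>p t k - p t (Suc k)\<bar>"
        using a by (rule mult_right_mono) simp
      then show ?case by (simp only: real_norm_def abs_mult)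
    qed
  qed
qed

end

context gs begin

lemma V_exists:
  "\<exists>V. (\<forall>i<n. ((\<lambda>t. qd t i) \<longlongrightarrow> V i) Fl) \<and> V k = V (Suc k)"
proof -
  obtain Lp where Lp: "\<forall>j. j < n \<and> j \<noteq> k \<and> j \<noteq> Suc k \<longrightarrow> ((\<lambda>t. p t j) \<longlongrightarrow> Lp j) Fl"
    using lim_pj by metis
  obtain LP where LP: "((\<lambda>t. p t k + p t (Suc k)) \<longlongrightarrow> LP) Fl" using lim_P by blast
  define V where "V i = (\<Sum>c<k. hmat qs i c * Lp c) + (\<Sum>c\<in>{Suc (Suc k)..<n}. hmat qs i c * Lp c) + hmat qs i k * LP" for i
  have hk: "hmat qs i (Suc k) = hmat qs i k" for i by (simp add: hmat_def sing)
  have lim_i: "((\<lambda>t. qd t i) \<longlongrightarrow> V i) Fl" if i: "i < n" for i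
  proof -
    have s1: "((\<lambda>t. \<Sum>c<k. hmat (q t) i c * p t c) \<longlongrightarrow> (\<Sum>c<k. hmat qs i c * Lp c)) Fl"
      using i kn Lp by (intro tendsto_intros hmat_lim) auto
    have s2: "((\<lambda>t. \<Sum>c\<in>{Suc (Suc k)..<n}. hmat (q t) i c * p t c) \<longlongrightarrow> (\<Sum>c\<in>{Suc (Suc k)..<n}. hmat qs i c * Lp c)) Fl"
      using i kn Lp by (intro tendsto_intros hmat_lim) auto
    have s3: "((\<lambda>t. ((hmat (q t) i k + hmat (q t) i (Suc k)) / 2) * (p t k + p t (Suc k))) \<longlongrightarrow> ((hmat qs i k + hmat qs i (Suc k)) / 2) * LP) Fl"
      using i kn LP by (intro tendsto_intros hmat_lim) auto
    have "((\<lambda>t. (\<Sum>c<k. hmat (q t) i c * p t c) + (\<Sum>c\<in>{Suc (Suc k)..<n}. hmat (q t) i c * p t c)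
     + ((hmat (q t) i k + hmat (q t) i (Suc k)) / 2) * (p t k + p t (Suc k))
     + ((hmat (q t) i k - hmat (q t) i (Suc k)) / 2) * (p t k - p t (Suc k))) \<longlongrightarrow>
       (\<Sum>c<k. hmat qs i c * Lp c) + (\<Sum>c\<in>{Suc (Suc k)..<n}. hmat qs i c * Lp c) + ((hmat qs i k + hmat qs i (Suc k)) / 2) * LP + 0) Fl"
      by (intro tendsto_add s1 s2 s3 diff_term_lim i)
    moreover have "(\<Sum>c<k. hmat qs i c * Lp c) + (\<Sum>c\<in>{Suc (Suc k)..<n}. hmat qs i c * Lp c) + ((hmat qs i k + hmat qs i (Suc k)) / 2) * LP + 0 = V i"
      unfolding V_def hk by simp
    moreover have "eventually (\<lambda>t. (\<Sum>c<k. hmat (q t) i c * p t c) + (\<Sum>c\<in>{Suc (Suc k)..<n}. hmat (q t) i c * p t c)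
     + ((hmat (q t) i k + hmat (q t) i (Suc k)) / 2) * (p t k + p t (Suc k))
     + ((hmat (q t) i k - hmat (q t) i (Suc k)) / 2) * (p t k - p t (Suc k)) = qd t i) Fl"
      using evI by eventually_elim (simp add: qd_decomp[OF _ i])
    ultimately show ?thesis using tendsto_cong by fastforce
  qed
  have "hmat qs k c = hmat qs (Suc k) c" for c by (simp add: hmat_def sing)
  then have "V k = V (Suc k)" unfolding V_def by simp
  then show ?thesis using lim_i by blast
qed

lemma final_ineq:
  assumes V: "\<forall>i<n. ((\<lambda>t. qd t i) \<longlongrightarrow> V i) Fl" and Vk: "V k = V (Suc k)" and t: "t \<in> I"
  shows "Bf (n - 1) (dropc k qs) (dropc k V) (dropc k V) \<le> Bf n (q t) (qd t) (qd t)"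
proof -
  have L: "((\<lambda>s. Bk n k (q s) (qd s) (qd s)) \<longlongrightarrow> Bk n k qs V V) Fl"
    using Bk_tendsto[of n q qs Fl qd V qd V k] lim V n0 kn qs_dist by auto
  have ev: "eventually (\<lambda>s. Bk n k (q s) (qd s) (qd s) \<le> E0) Fl"
    using evI
  proof eventually_elim
    case (elim s)
    have y: "q s \<in> chamber n" using ch[OF elim] .
    have "0 \<le> Tm (q s) (qd s) (qd s) k"
      unfolding Tm_def using one_minus_ee2[OF y kn] by (intro divide_nonneg_pos) auto
    then have "Bk n k (q s) (qd s) (qd s) \<le> Bf n (q s) (qd s) (qd s)" using Bf_split[OF kn] by simp
    then show ?case using En_const[OF elim] by (simp add: En_def)
  qed
  have "Bk n k qs V V \<le> E0"
    by (rule tendsto_upperbound[OF L ev]) simp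
  moreover have "Bk n k qs V V = Bf (n - 1) (dropc k qs) (dropc k V) (dropc k V)"
    using Bk_dup[OF kn, of "dropc k qs" "dropc k V" "dropc k V"] dup_dropc[OF sing] dup_dropc[OF Vk] by simp
  moreover have "Bf n (q t) (qd t) (qd t) = E0" using En_const[OF t] by (simp add: En_def)
  ultimately show ?thesis by simp
qed

end

theorem lemma5:
  fixes n k :: nat and ts :: real
    and q qd p :: "real \<Rightarrow> nat \<Rightarrow> real" and qs :: "nat \<Rightarrow> real"
  assumes n2: "2 \<le> n"
    and k: "k + 1 < n"
    and ts: "0 < ts"
    and geo: "geodesic n ts q qd p"
    and ord: "\<forall>t\<in>{0..<ts}. q t \<in> chamber n"
    and lim: "\<forall>i<n. ((\<lambda>t. q t i) \<longlongrightarrow> qs i) (at_left ts)"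
    and sing: "qs k = qs (k + 1)"
    and dist: "\<forall>i<n. \<forall>j<n. i \<noteq> j \<and> \<not> ({i, j} = {k, k + 1}) \<longrightarrow> qs i \<noteq> qs j"
  shows "(\<exists>L. ((\<lambda>t. p t k + p t (k + 1)) \<longlongrightarrow> L) (at_left ts)) \<and>
         (\<forall>j<n. j \<noteq> k \<and> j \<noteq> k + 1 \<longrightarrow> (\<exists>L. ((\<lambda>t. p t j) \<longlongrightarrow> L) (at_left ts))) \<and>
         (\<exists>V. (\<forall>i<n. ((\<lambda>t. qd t i) \<longlongrightarrow> V i) (at_left ts)) \<and> V k = V (k + 1) \<and>
            (\<exists>Gt. riemannian (n - 1) (chamber (n - 1)) Gt \<and>
               (\<forall>x\<in>chamber (n - 1). \<forall>u w.
                  tends_within n (\<lambda>y. bilin n (gmat n y) (dup k u) (dup k w))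
                    (bilin (n - 1) (Gt x) u w) (dup k x) (chamber n)) \<and>
               (\<forall>t\<in>{0..<ts}. bilin (n - 1) (Gt (dropc k qs)) (dropc k V) (dropc k V)
                               \<le> bilin n (gmat n (q t)) (qd t) (qd t))))"
proof -
  interpret gs n k ts q qd p qs
    using assms by unfold_locales auto
  have kn: "Suc k < n" using k by simp
  have n1: "0 < n - 1" using kn by simp
  obtain V where V: "\<forall>i<n. ((\<lambda>t. qd t i) \<longlongrightarrow> V i) (at_left ts)" and Vk: "V k = V (Suc k)"
    using V_exists by blast
  have part3: "\<forall>t\<in>{0..<ts}. bilin (n - 1) (Gm (n - 1) (dropc k qs)) (dropc k V) (dropc k V)
                               \<le> bilin n (gmat n (q t)) (qd t) (qd t)"
  proof
    fix t assume t: "t \<in> {0..<ts}"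
    show "bilin (n - 1) (Gm (n - 1) (dropc k qs)) (dropc k V) (dropc k V) \<le> bilin n (gmat n (q t)) (qd t) (qd t)"
      using final_ineq[OF V Vk t] bilin_Gm[OF n1] bilin_gmat[OF ch[OF t] n0] by simp
  qed
  show ?thesis
  proof (intro conjI)
    show "\<exists>L. ((\<lambda>t. p t k + p t (k + 1)) \<longlongrightarrow> L) (at_left ts)" using lim_P by simp
    show "\<forall>j<n. j \<noteq> k \<and> j \<noteq> k + 1 \<longrightarrow> (\<exists>L. ((\<lambda>t. p t j) \<longlongrightarrow> L) (at_left ts))" using lim_pj by simp
    show "\<exists>V. (\<forall>i<n. ((\<lambda>t. qd t i) \<longlongrightarrow> V i) (at_left ts)) \<and> V k = V (k + 1) \<and>
            (\<exists>Gt. riemannian (n - 1) (chamber (n - 1)) Gt \<and>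
               (\<forall>x\<in>chamber (n - 1). \<forall>u w.
                  tends_within n (\<lambda>y. bilin n (gmat n y) (dup k u) (dup k w))
                    (bilin (n - 1) (Gt x) u w) (dup k x) (chamber n)) \<and>
               (\<forall>t\<in>{0..<ts}. bilin (n - 1) (Gt (dropc k qs)) (dropc k V) (dropc k V)
                               \<le> bilin n (gmat n (q t)) (qd t) (qd t)))"
      using V Vk riem_Gm[OF n1] part_tends[OF kn] part3 by (intro exI[of _ V] conjI exI[of _ "Gm (n - 1)"]) auto
  qed
qed

end
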